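(* Let $m,n$ be nonnegative integers. The graphs $A(m)$ and $A(n)$ are isomorphic as edge-labeled directed graphs if and only if there exists a nonnegative integer $t$ such that $m=2^tn+2^t-1$ or $n=2^tm+2^t-1$.
   Context: A hyperbinary expansion of a nonnegative integer $n$ is a word $x_0\cdots x_k$ over $\{0,1,2\}$ with $x_0\ne0$ and $\sum_i x_i2^{k-i}=n$; the empty word is the unique expansion of $0$. $\mathcal H(n)$ is the set of such expansions. $A(n)$ is the directed graph on $\mathcal H(n)$ with the following labeled arcs, for arbitrary words $\mathbf x,\mathbf y$ whenever both endpoints lie in $\mathcal H(n)$: \begin{itemize} \item an arc labeled $\to$ from $\mathbf x02\mathbf y$ to $\mathbf x10\mathbf y$ and from $2\mathbf y$ to $10\mathbf y$; \item an arc labeled $\twoheadrightarrow$ from $\mathbf x12\mathbf y$ to $\mathbf x20\mathbf y$. \end{itemize} An isomorphism of edge-labeled directed graphs is a bijection $\varphi$ of vertex sets such that $(x,y)$ is an arc with label $\ell$ if and only if $(\varphi(x),\varphi(y))$ is an arc with label $\ell$. *)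

theory Defs
  imports Main
begin

text \<open>Words over the alphabet {0,1,2} are represented as lists of naturals with all entries at most 2.
  The word x_0 ... x_k is the list [x_0, ..., x_k]; its value is sum_i x_i 2^(k-i).\<close>

fun word_val :: "nat list \<Rightarrow> nat" where
  "word_val xs = foldl (\<lambda>a d. 2 * a + d) 0 xs"

definition hyperbinary :: "nat \<Rightarrow> nat list set" where
  "hyperbinary n = {w. (\<forall>d\<in>set w. d \<le> 2) \<and> (w \<noteq> [] \<longrightarrow> hd w \<noteq> 0) \<and> word_val w = n}"

datatype arc_label = Single | Double  (* Single: \<rightarrow>, Double: \<twoheadrightarrow> *)

definition arcA :: "nat \<Rightarrow> arc_label \<Rightarrow> nat list \<Rightarrow> nat list \<Rightarrow> bool" where
  "arcA n l u v \<longleftrightarrow> u \<in> hyperbinary n \<and> v \<in> hyperbinary n \<and>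
     (case l of
        Single \<Rightarrow> (\<exists>x y. u = x @ [0, 2] @ y \<and> v = x @ [1, 0] @ y) \<or>
                  (\<exists>y. u = 2 # y \<and> v = [1, 0] @ y)
      | Double \<Rightarrow> (\<exists>x y. u = x @ [1, 2] @ y \<and> v = x @ [2, 0] @ y))"

definition A_iso :: "nat \<Rightarrow> nat \<Rightarrow> bool" where
  "A_iso m n \<longleftrightarrow> (\<exists>\<phi>. bij_betw \<phi> (hyperbinary m) (hyperbinary n) \<and>
     (\<forall>l. \<forall>u\<in>hyperbinary m. \<forall>v\<in>hyperbinary m. arcA m l u v \<longleftrightarrow> arcA n l (\<phi> u) (\<phi> v)))"

end

theory Submission
  imports Defs
begin


definition dig :: "nat list \<Rightarrow> nat \<Rightarrow> nat" where
  "dig w j = (if j < length w then rev w ! j else 0)"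

definition lo :: "nat list \<Rightarrow> nat \<Rightarrow> nat" where
  "lo w i = (\<Sum>j<i. dig w j * 2^j)"

lemma word_val_snoc: "word_val (w @ [d]) = 2 * word_val w + d"
  by simp

lemma dig_snoc0: "dig (w @ [d]) 0 = d"
  by (simp add: dig_def)

lemma dig_snocS: "dig (w @ [d]) (Suc j) = dig w j"
  by (simp add: dig_def)

lemma dig_Nil[simp]: "dig [] j = 0" by (simp add: dig_def)

lemma lo_Suc: "lo w (Suc i) = lo w i + dig w i * 2^i"
  by (simp add: lo_def)

lemma lo_0[simp]: "lo w 0 = 0" by (simp add: lo_def)

lemma lo_snoc_Suc: "lo (w @ [d]) (Suc i) = d + 2 * lo w i"
proof (induction i)
  case 0 then show ?case by (simp add: lo_def dig_snoc0)
next
  case (Suc i)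
  then show ?case by (simp add: lo_Suc dig_snocS algebra_simps)
qed

lemma dig_ge_len: "length w \<le> j \<Longrightarrow> dig w j = 0"
  by (simp add: dig_def)

lemma lo_ge_len: "length w \<le> i \<Longrightarrow> lo w i = lo w (length w)"
proof (induction i)
  case 0 then show ?case by simp
next
  case (Suc i)
  show ?case
  proof (cases "length w \<le> i")
    case True then show ?thesis using Suc by (simp add: lo_Suc dig_ge_len)
  next
    case False then have "length w = Suc i" using Suc.prems by simp
    then show ?thesis by simp
  qed
qed

lemma word_val_lo: "word_val w = lo w (length w)"
proof (induction w rule: rev_induct)
  case Nil then show ?case by (simp add: lo_def)
next
  case (snoc d w)
  have "word_val (w @ [d]) = 2 * word_val w + d" by (rule word_val_snoc)
  also have "\<dots> = d + 2 * lo w (length w)" using snoc by simp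
  also have "\<dots> = lo (w @ [d]) (Suc (length w))" by (rule lo_snoc_Suc[symmetric])
  finally show ?case by simp
qed

lemma word_val_lo_ge: "length w \<le> i \<Longrightarrow> word_val w = lo w i"
  using lo_ge_len word_val_lo by metis

lemma dig_le2: assumes "\<forall>d\<in>set w. d \<le> 2" shows "dig w j \<le> 2"
proof (cases "j < length w")
  case True
  then have "rev w ! j \<in> set (rev w)" by (intro nth_mem) simp
  then show ?thesis using True assms by (auto simp: dig_def)
qed (simp add: dig_def)

lemma lo_bound: assumes "\<forall>d\<in>set w. d \<le> 2" shows "lo w i + 2 \<le> 2 * 2^i"
proof (induction i)
  case 0 then show ?case by simp
next
  case (Suc i)
  have "dig w i \<le> 2" using dig_le2[OF assms] .
  then have "dig w i * 2^i \<le> 2 * 2^i" by simp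
  have "lo w (Suc i) = lo w i + dig w i * 2^i" by (simp add: lo_Suc)
  moreover have "(2::nat)^(Suc i) = 2 * 2^i" by simp
  ultimately show ?case using Suc.IH \<open>dig w i * 2^i \<le> 2 * 2^i\<close> by linarith
qed

lemma lo_mono: "i \<le> j \<Longrightarrow> lo w i \<le> lo w j"
proof (induction j)
  case 0 then show ?case by simp
next
  case (Suc j)
  show ?case
  proof (cases "i = Suc j")
    case True then show ?thesis by simp
  next
    case False then have "lo w i \<le> lo w j" using Suc by simp
    then show ?thesis by (simp add: lo_Suc)
  qed
qed

lemma lo_mod: "i \<le> j \<Longrightarrow> lo w j mod 2^i = lo w i mod 2^i"
proof (induction j)
  case 0 then show ?case by simp
next
  case (Suc j)
  show ?case
  proof (cases "i = Suc j")
    case True then show ?thesis by simp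
  next
    case False
    then have "i \<le> j" using Suc.prems by simp
    then have "(2::nat)^i dvd 2^j" by (simp add: le_imp_power_dvd)
    then have "(dig w j * 2^j) mod 2^i = 0" by simp
    have "lo w (Suc j) mod 2^i = (lo w j + dig w j * 2^j) mod 2^i" by (simp add: lo_Suc)
    also have "\<dots> = (lo w j mod 2^i + (dig w j * 2^j) mod 2^i) mod 2^i" by (simp add: mod_add_eq)
    also have "\<dots> = lo w i mod 2^i" using Suc.IH[OF \<open>i \<le> j\<close>] \<open>(dig w j * 2^j) mod 2^i = 0\<close> by simp
    finally show ?thesis .
  qed
qed


lemma mod_Suc_bit: "(n::nat) mod 2^(Suc j) = n mod 2^j + of_bool (bit n j) * 2^j"
  using take_bit_Suc_from_most[of j n] by (simp add: take_bit_eq_mod mult.commute)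

definition xset :: "nat list \<Rightarrow> nat set" where "xset w = {i. 2^i \<le> lo w i}"
definition fence :: "nat \<Rightarrow> nat set" where "fence n = {i. 1 \<le> i \<and> 2^i \<le> n}"
definition valid :: "nat \<Rightarrow> nat set \<Rightarrow> bool" where
  "valid n X \<longleftrightarrow> X \<subseteq> fence n \<and> (\<forall>j. (j \<in> X \<and> \<not> bit n j \<longrightarrow> Suc j \<in> X) \<and> (Suc j \<in> X \<and> bit n j \<longrightarrow> j \<in> X))"

lemma hbD: assumes "w \<in> hyperbinary n"
  shows "\<forall>d\<in>set w. d \<le> 2" "w \<noteq> [] \<Longrightarrow> hd w \<noteq> 0" "word_val w = n"
  using assms by (auto simp: hyperbinary_def simp del: word_val.simps)

lemma lo_le_n: assumes "w \<in> hyperbinary n" shows "lo w i \<le> n"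
proof (cases "i \<le> length w")
  case True then have "lo w i \<le> lo w (length w)" by (rule lo_mono)
  then show ?thesis using hbD(3)[OF assms] word_val_lo by simp
next
  case False then show ?thesis using hbD(3)[OF assms] word_val_lo_ge[of w i] by simp
qed

lemma lo_modn: assumes "w \<in> hyperbinary n" shows "lo w i mod 2^i = n mod 2^i"
proof -
  have "n = lo w (max i (length w))" using hbD(3)[OF assms] word_val_lo_ge[of w "max i (length w)"] by simp
  then show ?thesis using lo_mod[of i "max i (length w)" w] by simp
qed

lemma CN: assumes "w \<in> hyperbinary n"
  shows "lo w i = n mod 2^i + (if i \<in> xset w then 2^i else 0)"
proof -
  have b: "lo w i + 2 \<le> 2 * 2^i" by (rule lo_bound[OF hbD(1)[OF assms]])
  have m: "lo w i mod 2^i = n mod 2^i" by (rule lo_modn[OF assms])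
  show ?thesis
  proof (cases "2^i \<le> lo w i")
    case True
    then have e: "lo w i = (lo w i - 2^i) + 2^i" by simp
    have lt: "lo w i - 2^i < 2^i" using b True by linarith
    have "(lo w i - 2^i) mod 2^i = lo w i mod 2^i" using e by (metis mod_add_self2)
    then have "lo w i - 2^i = n mod 2^i" using lt m by simp
    then show ?thesis using True by (simp add: xset_def)
  next
    case False
    then have "lo w i = n mod 2^i" using m by simp
    then show ?thesis using False by (simp add: xset_def)
  qed
qed

lemma CN': assumes "w \<in> hyperbinary n"
  shows "lo w i = n mod 2^i + of_bool (i \<in> xset w) * 2^i"
  using CN[OF assms, of i] by simp

lemma DE: assumes "w \<in> hyperbinary n"
  shows "dig w j + of_bool (j \<in> xset w) = of_bool (bit n j) + 2 * of_bool (Suc j \<in> xset w)"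
proof -
  have E1: "lo w (Suc j) = lo w j + dig w j * 2^j" by (rule lo_Suc)
  have E2: "lo w j = n mod 2^j + of_bool (j \<in> xset w) * 2^j" by (rule CN'[OF assms])
  have E3: "lo w (Suc j) = n mod 2^(Suc j) + of_bool (Suc j \<in> xset w) * 2^(Suc j)" by (rule CN'[OF assms])
  have E4: "n mod 2^(Suc j) = n mod 2^j + of_bool (bit n j) * 2^j" by (rule mod_Suc_bit)
  have E5: "of_bool (Suc j \<in> xset w) * (2::nat)^(Suc j) = 2 * (of_bool (Suc j \<in> xset w) * 2^j)" by simp
  have "of_bool (bit n j) * 2^j + 2 * (of_bool (Suc j \<in> xset w) * 2^j) = dig w j * 2^j + of_bool (j \<in> xset w) * (2::nat)^j"
    using E1 E2 E3 E4 E5 by linarith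
  then have "(of_bool (bit n j) + 2 * of_bool (Suc j \<in> xset w)) * 2^j = (dig w j + of_bool (j \<in> xset w)) * (2::nat)^j"
    by (simp add: algebra_simps)
  then show ?thesis by simp
qed

lemma xset_fence: assumes "w \<in> hyperbinary n" shows "xset w \<subseteq> fence n"
proof
  fix i assume i: "i \<in> xset w"
  then have "2^i \<le> lo w i" by (simp add: xset_def)
  moreover have "i \<noteq> 0" using i by (cases i) (auto simp: xset_def)
  ultimately show "i \<in> fence n" using lo_le_n[OF assms, of i] by (auto simp: fence_def)
qed

lemma valid_xset: assumes "w \<in> hyperbinary n" shows "valid n (xset w)"
  unfolding valid_def
proof (intro conjI allI impI)
  show "xset w \<subseteq> fence n" by (rule xset_fence[OF assms])
next
  fix j
  have e: "dig w j + of_bool (j \<in> xset w) = of_bool (bit n j) + 2 * of_bool (Suc j \<in> xset w)" by (rule DE[OF assms])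
  have d: "dig w j \<le> 2" by (rule dig_le2[OF hbD(1)[OF assms]])
  { assume "j \<in> xset w \<and> \<not> bit n j"
    then show "Suc j \<in> xset w" using e by (cases "Suc j \<in> xset w") auto }
  { assume "Suc j \<in> xset w \<and> bit n j"
    then show "j \<in> xset w" using e d by (cases "j \<in> xset w") auto }
qed


lemma dig_append: "dig (xs @ ys) j = (if j < length ys then dig ys j else dig xs (j - length ys))"
  by (auto simp: dig_def nth_append)

lemma dig_len1: assumes "v \<noteq> []" shows "dig v (length v - 1) = hd v"
  using assms by (simp add: dig_def rev_nth hd_conv_nth)

lemma dig_inj:
  assumes hu: "u \<noteq> [] \<longrightarrow> hd u \<noteq> 0" and hv: "v \<noteq> [] \<longrightarrow> hd v \<noteq> 0"
    and e: "\<And>j. dig u j = dig v j"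
  shows "u = v"
proof -
  have len: "length u = length v"
  proof (rule ccontr)
    assume ne: "length u \<noteq> length v"
    show False
    proof (cases "length u < length v")
      case True
      then have "v \<noteq> []" by auto
      then have "dig v (length v - 1) \<noteq> 0" using hv dig_len1 by simp
      moreover have "dig u (length v - 1) = 0" using True by (intro dig_ge_len) simp
      ultimately show False using e by simp
    next
      case False
      then have lt: "length v < length u" using ne by simp
      then have "u \<noteq> []" by auto
      then have "dig u (length u - 1) \<noteq> 0" using hu dig_len1 by simp
      moreover have "dig v (length u - 1) = 0" using lt by (intro dig_ge_len) simp
      ultimately show False using e by simp
    qed
  qed
  have "rev u = rev v"
  proof (rule nth_equalityI)
    show "length (rev u) = length (rev v)" using len by simp
    fix j assume "j < length (rev u)"
    then show "rev u ! j = rev v ! j" using e[of j] len by (simp add: dig_def)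
  qed
  then show ?thesis by simp
qed

lemma xset_inj: assumes "u \<in> hyperbinary n" "v \<in> hyperbinary n" "xset u = xset v"
  shows "u = v"
proof (rule dig_inj)
  show "u \<noteq> [] \<longrightarrow> hd u \<noteq> 0" using hbD(2)[OF assms(1)] by simp
  show "v \<noteq> [] \<longrightarrow> hd v \<noteq> 0" using hbD(2)[OF assms(2)] by simp
  fix j
  show "dig u j = dig v j" using DE[OF assms(1), of j] DE[OF assms(2), of j] assms(3) by simp
qed

lemma validD: assumes "valid n X"
  shows "X \<subseteq> fence n" "j \<in> X \<Longrightarrow> \<not> bit n j \<Longrightarrow> Suc j \<in> X" "Suc j \<in> X \<Longrightarrow> bit n j \<Longrightarrow> j \<in> X"
  using assms unfolding valid_def by blast+

lemma fence_pos: "i \<in> fence n \<Longrightarrow> 1 \<le> i" by (simp add: fence_def)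

lemma big_not_fence: "n < 2^j \<Longrightarrow> j \<notin> fence n" unfolding fence_def by simp

lemma big_not_bit: assumes "(n::nat) < 2^j" shows "\<not> bit n j"
proof -
  have "n div 2^j = 0" using assms by simp
  then show ?thesis unfolding bit_iff_odd by simp
qed

lemma dig_zeros: assumes "\<forall>x\<in>set zs. x = 0" shows "dig (zs @ w) j = dig w j"
proof (cases "j < length w")
  case True then show ?thesis by (simp add: dig_append)
next
  case False
  have "dig zs (j - length w) = 0"
  proof (cases "j - length w < length zs")
    case True
    then have "rev zs ! (j - length w) \<in> set zs" using nth_mem[of "j - length w" "rev zs"] by simp
    then show ?thesis using assms True by (simp add: dig_def)
  qed (simp add: dig_def)
  then show ?thesis using False by (simp add: dig_append dig_ge_len)
qed

lemma exists_word:
  assumes V: "valid n X" shows "\<exists>w\<in>hyperbinary n. xset w = X"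
proof -
  define d :: "nat \<Rightarrow> nat" where "d j = of_bool (bit n j) + 2 * of_bool (Suc j \<in> X) - of_bool (j \<in> X)" for j
  have dE: "d j + of_bool (j \<in> X) = of_bool (bit n j) + 2 * of_bool (Suc j \<in> X)" for j
    using validD(2)[OF V, of j] unfolding d_def by (cases "j \<in> X"; cases "bit n j"; cases "Suc j \<in> X") auto
  have d2: "d j \<le> 2" for j
    using validD(3)[OF V, of j] unfolding d_def by (cases "j \<in> X"; cases "bit n j"; cases "Suc j \<in> X") auto
  define B where "B = Suc n"
  have nB: "n < 2^B" unfolding B_def by (metis Suc_lessD less_exp)
  have d0: "d j = 0" if "B \<le> j" for j
  proof -
    have "(2::nat)^B \<le> 2^j" using that by (rule power_increasing) simp
    then have "n < 2^j" using nB by linarith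
    moreover have "n < 2^(Suc j)" using \<open>n < 2^j\<close> by simp
    ultimately have "\<not> bit n j" "j \<notin> X" "Suc j \<notin> X"
      using big_not_bit big_not_fence validD(1)[OF V] by blast+
    then show ?thesis unfolding d_def by simp
  qed
  define r where "r = rev (map d [0..<B])"
  define w where "w = dropWhile (\<lambda>x. x = 0) r"
  have digr: "dig r j = d j" for j
    using d0[of j] by (auto simp: r_def dig_def)
  have rw: "r = takeWhile (\<lambda>x. x = 0) r @ w" unfolding w_def by simp
  have zs: "\<forall>x\<in>set (takeWhile (\<lambda>x. x = 0) r). x = 0" by (auto dest: set_takeWhileD)
  have digw: "dig w j = d j" for j
  proof -
    have "dig (takeWhile (\<lambda>x. x = 0) r @ w) j = dig w j" by (rule dig_zeros[OF zs])
    then have "dig r j = dig w j" by (simp only: rw[symmetric])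
    then show ?thesis using digr[of j] by simp
  qed
  have hdw: "w \<noteq> [] \<Longrightarrow> hd w \<noteq> 0" unfolding w_def using hd_dropWhile[of "\<lambda>x. x = 0" r] by simp
  have setw: "\<forall>x\<in>set w. x \<le> 2"
  proof
    fix x assume "x \<in> set w"
    then have "x \<in> set r" unfolding w_def by (rule set_dropWhileD)
    then show "x \<le> 2" using d2 by (auto simp: r_def)
  qed
  have lenw: "length w \<le> B"
  proof -
    have "length w \<le> length r" unfolding w_def by (rule length_dropWhile_le)
    moreover have "length r = B" by (simp add: r_def)
    ultimately show ?thesis by simp
  qed
  have low: "lo w t = n mod 2^t + of_bool (t \<in> X) * 2^t" for t
  proof (induction t)
    case 0
    have "0 \<notin> X" using validD(1)[OF V] fence_pos by fastforce
    then show ?case by simp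
  next
    case (Suc t)
    have "lo w (Suc t) = n mod 2^t + of_bool (t \<in> X) * 2^t + d t * 2^t" using Suc by (simp add: lo_Suc digw)
    also have "\<dots> = n mod 2^t + (d t + of_bool (t \<in> X)) * 2^t" by (simp add: algebra_simps)
    also have "\<dots> = n mod 2^t + (of_bool (bit n t) + 2 * of_bool (Suc t \<in> X)) * 2^t" by (simp only: dE)
    also have "\<dots> = n mod 2^(Suc t) + of_bool (Suc t \<in> X) * 2^(Suc t)"
    proof -
      have "n mod 2^(Suc t) = n mod 2^t + of_bool (bit n t) * 2^t" by (rule mod_Suc_bit)
      moreover have "of_bool (Suc t \<in> X) * (2::nat)^(Suc t) = 2 * (of_bool (Suc t \<in> X) * 2^t)" by simp
      ultimately show ?thesis by (simp add: algebra_simps)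
    qed
    finally show ?case .
  qed
  have "word_val w = n"
  proof -
    have "word_val w = lo w B" using lenw by (rule word_val_lo_ge)
    also have "\<dots> = n"
    proof -
      have "B \<notin> X" using nB big_not_fence validD(1)[OF V] by blast
      then show ?thesis using low[of B] nB by simp
    qed
    finally show ?thesis .
  qed
  then have wH: "w \<in> hyperbinary n" using setw hdw unfolding hyperbinary_def mem_Collect_eq by (intro conjI) auto
  have "xset w = X"
  proof -
    have "(2^t \<le> lo w t) = (t \<in> X)" for t
    proof -
      have lt: "n mod 2^t < 2^t" by simp
      show ?thesis
      proof (cases "t \<in> X")
        case True then show ?thesis using low[of t] by simp
      next
        case False then have "lo w t = n mod 2^t" using low[of t] by simp
        then show ?thesis using lt False by linarith
      qed
    qed
    then show ?thesis by (auto simp: xset_def)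
  qed
  then show ?thesis using wH by blast
qed


lemma dig_mid: "dig (x @ a # b # y) j = (if j < length y then dig y j else if j = length y then b
   else if j = Suc (length y) then a else dig x (j - length y - 2))"
proof -
  have e: "x @ a # b # y = x @ [a, b] @ y" by simp
  show ?thesis unfolding e dig_append
    by (auto simp: dig_def nth_append)
qed

definition digrel :: "nat list \<Rightarrow> nat list \<Rightarrow> nat \<Rightarrow> bool" where
  "digrel u v i \<longleftrightarrow> 1 \<le> i \<and> dig u (i-1) = 2 \<and> dig v (i-1) = 0 \<and> dig u i \<le> 1 \<and> dig v i = dig u i + 1 \<and>
     (\<forall>j. j \<noteq> i - 1 \<and> j \<noteq> i \<longrightarrow> dig u j = dig v j)"

lemma digrel_mid: "a \<le> 1 \<Longrightarrow> digrel (x @ a # 2 # y) (x @ Suc a # 0 # y) (Suc (length y))"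
  unfolding digrel_def by (simp add: dig_mid)

lemma dig_cons0: "dig (0 # w) = dig w"
proof
  fix j show "dig (0 # w) j = dig w j" using dig_zeros[of "[0]" w j] by simp
qed

lemma arc_digrel:
  assumes "arcA n l u v"
  shows "u \<in> hyperbinary n" "v \<in> hyperbinary n"
    "\<exists>i. digrel u v i \<and> l = (if dig u i = 0 then Single else Double)"
proof -
  show "u \<in> hyperbinary n" "v \<in> hyperbinary n" using assms by (auto simp: arcA_def)
  show "\<exists>i. digrel u v i \<and> l = (if dig u i = 0 then Single else Double)"
  proof (cases l)
    case Single
    then have "(\<exists>x y. u = x @ [0, 2] @ y \<and> v = x @ [1, 0] @ y) \<or> (\<exists>y. u = 2 # y \<and> v = [1, 0] @ y)"
      using assms by (simp add: arcA_def)
    then show ?thesis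
    proof
      assume "\<exists>x y. u = x @ [0, 2] @ y \<and> v = x @ [1, 0] @ y"
      then obtain x y where u: "u = x @ 0 # 2 # y" and v: "v = x @ Suc 0 # 0 # y" by auto
      have "digrel u v (Suc (length y))" unfolding u v by (rule digrel_mid) simp
      moreover have "dig u (Suc (length y)) = 0" unfolding u by (simp add: dig_mid)
      ultimately show ?thesis using Single by auto
    next
      assume "\<exists>y. u = 2 # y \<and> v = [1, 0] @ y"
      then obtain y where u: "u = 2 # y" and v: "v = [] @ Suc 0 # 0 # y" by auto
      have du: "dig u = dig ([] @ 0 # 2 # y)" unfolding u by (simp add: dig_cons0)
      have "digrel ([] @ 0 # 2 # y) v (Suc (length y))" unfolding v by (rule digrel_mid) simp
      then have "digrel u v (Suc (length y))" using du unfolding digrel_def by simp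
      moreover have "dig u (Suc (length y)) = 0" unfolding du using dig_mid[of "[]" 0 2 y "Suc (length y)"] by simp
      ultimately show ?thesis using Single by auto
    qed
  next
    case Double
    then have "\<exists>x y. u = x @ [1, 2] @ y \<and> v = x @ [2, 0] @ y"
      using assms by (simp add: arcA_def)
    then obtain x y where u: "u = x @ 1 # 2 # y" and v: "v = x @ Suc 1 # 0 # y" by auto
    have "digrel u v (Suc (length y))" unfolding u v by (rule digrel_mid) simp
    moreover have "dig u (Suc (length y)) = 1" unfolding u by (simp add: dig_mid)
    ultimately show ?thesis using Double by (intro exI[of _ "Suc (length y)"]) simp
  qed
qed

lemma lo_eq_upto: "(\<And>j. j < t \<Longrightarrow> dig u j = dig v j) \<Longrightarrow> lo u t = lo v t"
  unfolding lo_def by (rule sum.cong) auto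

lemma digrel_lo:
  assumes d: "digrel u v i"
  shows "lo u i = lo v i + 2^i" "t \<noteq> i \<Longrightarrow> lo u t = lo v t"
proof -
  obtain k where k: "i = Suc k" using d unfolding digrel_def by (cases i) auto
  have dk: "dig u k = 2" "dig v k = 0" "dig v i = dig u i + 1" and oth: "\<And>j. j \<noteq> k \<Longrightarrow> j \<noteq> i \<Longrightarrow> dig u j = dig v j"
    using d unfolding digrel_def k by auto
  have lk: "lo u k = lo v k" by (rule lo_eq_upto) (use oth k in auto)
  show li: "lo u i = lo v i + 2^i" unfolding k using lk dk by (simp add: lo_Suc)
  have lSi: "lo u (Suc i) = lo v (Suc i)" using li dk(3) by (simp add: lo_Suc algebra_simps)
  have ge: "lo u t = lo v t" if "Suc i \<le> t" for t
    using that
  proof (induction t)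
    case 0 then show ?case by simp
  next
    case (Suc t)
    show ?case
    proof (cases "Suc i = Suc t")
      case True then show ?thesis using lSi by simp
    next
      case False
      then have "Suc i \<le> t" using Suc.prems by simp
      then have "lo u t = lo v t" "dig u t = dig v t" using Suc.IH oth[of t] k by auto
      then show ?thesis by (simp add: lo_Suc)
    qed
  qed
  assume "t \<noteq> i"
  show "lo u t = lo v t"
  proof (cases "t \<le> k")
    case True then show ?thesis by (intro lo_eq_upto) (use oth k in auto)
  next
    case False then have "Suc i \<le> t" using \<open>t \<noteq> i\<close> k by simp
    then show ?thesis by (rule ge)
  qed
qed

lemma digrel_xset:
  assumes hu: "u \<in> hyperbinary n" and hv: "v \<in> hyperbinary n" and d: "digrel u v i"
  shows "i \<in> xset u" "xset v = xset u - {i}" "(dig u i = 0) = bit n i"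
proof -
  have li: "lo u i = lo v i + 2^i" by (rule digrel_lo(1)[OF d])
  have bu: "lo u i + 2 \<le> 2 * 2^i" by (rule lo_bound[OF hbD(1)[OF hu]])
  show iu: "i \<in> xset u" using li by (simp add: xset_def)
  have iv: "i \<notin> xset v" using li bu by (simp add: xset_def)
  have "t \<in> xset v \<longleftrightarrow> t \<in> xset u" if "t \<noteq> i" for t
    using digrel_lo(2)[OF d that] by (simp add: xset_def)
  then show "xset v = xset u - {i}" using iu iv by (intro set_eqI) (metis DiffD1 DiffD2 DiffI singletonD singletonI)
  have e: "dig u i + 1 = of_bool (bit n i) + 2 * of_bool (Suc i \<in> xset u)"
    using DE[OF hu, of i] iu by simp
  have "dig u i \<le> 1" using d by (simp add: digrel_def)
  then show "(dig u i = 0) = bit n i" using e by (cases "bit n i"; cases "Suc i \<in> xset u") auto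
qed


lemma surg_common:
  assumes du: "dig u = dig (x @ a # 2 # y)" and d: "digrel u v (Suc (length y))"
    and hv: "v \<noteq> [] \<longrightarrow> hd v \<noteq> 0" and hx: "x \<noteq> [] \<longrightarrow> hd x \<noteq> 0"
  shows "v = x @ Suc a # 0 # y"
proof (rule dig_inj)
  show "v \<noteq> [] \<longrightarrow> hd v \<noteq> 0" by (rule hv)
  show "x @ Suc a # 0 # y \<noteq> [] \<longrightarrow> hd (x @ Suc a # 0 # y) \<noteq> 0" using hx by (cases x) auto
  fix j
  have dd: "dig v (length y) = 0" "dig v (Suc (length y)) = dig u (Suc (length y)) + 1"
    "\<And>j. j \<noteq> length y \<Longrightarrow> j \<noteq> Suc (length y) \<Longrightarrow> dig u j = dig v j"
    using d unfolding digrel_def by auto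
  have dui: "dig u (Suc (length y)) = a" using du by (simp add: dig_mid)
  show "dig v j = dig (x @ Suc a # 0 # y) j"
  proof (cases "j = length y \<or> j = Suc (length y)")
    case True then show ?thesis using dd dui by (auto simp: dig_mid)
  next
    case False
    then have "dig v j = dig u j" using dd(3)[of j] by simp
    also have "\<dots> = dig (x @ a # 2 # y) j" using du by simp
    also have "\<dots> = dig (x @ Suc a # 0 # y) j" using False by (simp add: dig_mid)
    finally show ?thesis .
  qed
qed

lemma split2: assumes "Suc p < length u" shows "u = take p u @ u ! p # u ! Suc p # drop (Suc (Suc p)) u"
proof -
  have "drop p u = u ! p # drop (Suc p) u" using assms by (simp add: Cons_nth_drop_Suc)
  moreover have "drop (Suc p) u = u ! Suc p # drop (Suc (Suc p)) u" using assms by (simp add: Cons_nth_drop_Suc)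
  ultimately show ?thesis by (metis append_take_drop_id)
qed

lemma surgery:
  assumes hu: "u \<noteq> [] \<longrightarrow> hd u \<noteq> 0" and hv: "v \<noteq> [] \<longrightarrow> hd v \<noteq> 0" and d: "digrel u v i"
  shows "(dig u i = 0 \<longrightarrow> (\<exists>x y. u = x @ [0, 2] @ y \<and> v = x @ [1, 0] @ y) \<or> (\<exists>y. u = 2 # y \<and> v = [1, 0] @ y))
       \<and> (dig u i = 1 \<longrightarrow> (\<exists>x y. u = x @ [1, 2] @ y \<and> v = x @ [2, 0] @ y))"
proof -
  obtain k where k: "i = Suc k" using d unfolding digrel_def by (cases i) auto
  have dk: "dig u k = 2" "dig u i \<le> 1" using d unfolding digrel_def k by auto
  define L where "L = length u"
  have kL: "k < L"
  proof (rule ccontr)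
    assume "\<not> k < L" then have "dig u k = 0" unfolding L_def by (intro dig_ge_len) simp
    then show False using dk by simp
  qed
  show ?thesis
  proof (cases "i < L")
    case True
    define p where "p = L - Suc (Suc k)"
    have pL: "Suc p < length u" using True k unfolding p_def L_def by simp
    define x where "x = take p u"
    define y where "y = drop (Suc (Suc p)) u"
    define a where "a = u ! p"
    define b where "b = u ! Suc p"
    have ly: "length y = k" using True k unfolding y_def p_def L_def by simp
    have ue: "u = x @ a # b # y" unfolding x_def y_def a_def b_def by (rule split2[OF pL])
    have "dig u k = b" using ue ly dig_mid[of x a b y k] by simp
    then have u2: "b = 2" using dk by simp
    have ue2: "u = x @ a # 2 # y" using ue u2 by simp
    have dua: "dig u i = a" using ue2 ly k by (simp add: dig_mid)
    have hx: "x \<noteq> [] \<longrightarrow> hd x \<noteq> 0" using hu ue2 by (cases x) auto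
    have ve: "v = x @ Suc a # 0 # y"
      by (rule surg_common[OF _ _ hv hx]) (use ue2 d ly k in auto)
    have a1: "a \<le> 1" using dua dk by simp
    have u3: "u = x @ [a, 2] @ y" and v3: "v = x @ [Suc a, 0] @ y" using ue2 ve by simp_all
    show ?thesis
    proof (cases "a = 0")
      case True
      then have "\<exists>x y. u = x @ [0, 2] @ y \<and> v = x @ [1, 0] @ y" using u3 v3 by auto
      then show ?thesis using dua True by simp
    next
      case False
      then have "a = 1" using a1 by simp
      then have "u = x @ [1, 2] @ y" "v = x @ [2, 0] @ y" using u3 v3 by (simp_all add: numeral_2_eq_2)
      then have "\<exists>x y. u = x @ [1, 2] @ y \<and> v = x @ [2, 0] @ y" by blast
      then show ?thesis using dua \<open>a = 1\<close> by simp
    qed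
  next
    case False
    then have iL: "i = L" using kL k by simp
    then have une: "u \<noteq> []" unfolding L_def using k by auto
    have "k = length u - 1" using iL k unfolding L_def by simp
    then have "hd u = dig u k" using dig_len1[OF une] by simp
    then have hd2: "hd u = 2" using dk by simp
    define y where "y = tl u"
    have ue: "u = 2 # y" using une hd2 unfolding y_def by (cases u) auto
    have ly: "length y = k" using iL k unfolding L_def y_def by simp
    have du: "dig u = dig ([] @ 0 # 2 # y)" using ue by (simp add: dig_cons0)
    have dua: "dig u i = 0" using iL unfolding L_def by (intro dig_ge_len) simp
    have ve: "v = [] @ Suc 0 # 0 # y"
      by (rule surg_common[OF du _ hv]) (use d ly k in auto)
    show ?thesis using ue ve dua by auto
  qed
qed

definition lab :: "nat \<Rightarrow> nat \<Rightarrow> arc_label" where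
  "lab n i = (if bit n i then Single else Double)"

lemma arc_exists:
  assumes hu: "u \<in> hyperbinary n" and iu: "i \<in> xset u" and V: "valid n (xset u - {i})"
  shows "\<exists>v. arcA n (lab n i) u v \<and> xset v = xset u - {i}"
proof -
  obtain v where hv: "v \<in> hyperbinary n" and xv: "xset v = xset u - {i}" using exists_word[OF V] by blast
  have i1: "1 \<le> i" using xset_fence[OF hu] iu fence_pos by blast
  obtain k where k: "i = Suc k" using i1 by (cases i) auto
  have eu: "\<And>j. dig u j + of_bool (j \<in> xset u) = of_bool (bit n j) + 2 * of_bool (Suc j \<in> xset u)"
    by (rule DE[OF hu])
  have ev: "\<And>j. dig v j + of_bool (j \<in> xset v) = of_bool (bit n j) + 2 * of_bool (Suc j \<in> xset v)"
    by (rule DE[OF hv])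
  have d: "digrel u v i"
    unfolding digrel_def
  proof (intro conjI allI impI)
    show "1 \<le> i" by (rule i1)
    have a: "dig u k + of_bool (k \<in> xset u) = of_bool (bit n k) + 2" using eu[of k] iu k by simp
    have b: "dig v k + of_bool (k \<in> xset u) = of_bool (bit n k)" using ev[of k] xv k by simp
    have c: "dig u k \<le> 2" by (rule dig_le2[OF hbD(1)[OF hu]])
    show "dig u (i - 1) = 2" using a b c k by simp
    show "dig v (i - 1) = 0" using a b c k by simp
    have a2: "dig u i + 1 = of_bool (bit n i) + 2 * of_bool (Suc i \<in> xset u)" using eu[of i] iu by simp
    have b2: "dig v i = of_bool (bit n i) + 2 * of_bool (Suc i \<in> xset u)" using ev[of i] xv by simp
    have c2: "dig v i \<le> 2" by (rule dig_le2[OF hbD(1)[OF hv]])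
    show "dig u i \<le> 1" using a2 b2 c2 by simp
    show "dig v i = dig u i + 1" using a2 b2 by simp
  next
    fix j assume j: "j \<noteq> i - 1 \<and> j \<noteq> i"
    then have "(j \<in> xset v) = (j \<in> xset u)" "(Suc j \<in> xset v) = (Suc j \<in> xset u)" using xv k by auto
    then show "dig u j = dig v j" using eu[of j] ev[of j] by simp
  qed
  have bi: "(dig u i = 0) = bit n i" by (rule digrel_xset(3)[OF hu hv d])
  have du1: "dig u i \<le> 1" using d by (simp add: digrel_def)
  have S: "(dig u i = 0 \<longrightarrow> (\<exists>x y. u = x @ [0, 2] @ y \<and> v = x @ [1, 0] @ y) \<or> (\<exists>y. u = 2 # y \<and> v = [1, 0] @ y))
       \<and> (dig u i = 1 \<longrightarrow> (\<exists>x y. u = x @ [1, 2] @ y \<and> v = x @ [2, 0] @ y))"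
    by (rule surgery[OF _ _ d]) (use hbD(2)[OF hu] hbD(2)[OF hv] in auto)
  have "arcA n (lab n i) u v"
  proof (cases "bit n i")
    case True
    then have "dig u i = 0" using bi by simp
    then show ?thesis using S hu hv True unfolding arcA_def lab_def by simp
  next
    case False
    then have "dig u i = 1" using bi du1 by simp
    then show ?thesis using S hu hv False unfolding arcA_def lab_def by simp
  qed
  then show ?thesis using xv by blast
qed

lemma arc_xset:
  assumes "arcA n l u v"
  shows "\<exists>i. i \<in> xset u \<and> xset v = xset u - {i} \<and> l = lab n i"
proof -
  have hu: "u \<in> hyperbinary n" and hv: "v \<in> hyperbinary n" using arc_digrel[OF assms] by auto
  obtain i where d: "digrel u v i" and l: "l = (if dig u i = 0 then Single else Double)" using arc_digrel(3)[OF assms] by blast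
  show ?thesis using digrel_xset[OF hu hv d] l unfolding lab_def by auto
qed

lemma out_char:
  assumes hu: "u \<in> hyperbinary n"
  shows "(\<exists>l. arcA n l u v) \<longleftrightarrow> v \<in> hyperbinary n \<and> (\<exists>i\<in>xset u. xset v = xset u - {i})"
proof
  assume "\<exists>l. arcA n l u v"
  then obtain l where a: "arcA n l u v" by blast
  show "v \<in> hyperbinary n \<and> (\<exists>i\<in>xset u. xset v = xset u - {i})"
    using arc_xset[OF a] arc_digrel(2)[OF a] by blast
next
  assume "v \<in> hyperbinary n \<and> (\<exists>i\<in>xset u. xset v = xset u - {i})"
  then obtain i where hv: "v \<in> hyperbinary n" and i: "i \<in> xset u" and xv: "xset v = xset u - {i}" by blast
  have "valid n (xset u - {i})" using valid_xset[OF hv] xv by simp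
  then obtain v' where a: "arcA n (lab n i) u v'" and xv': "xset v' = xset u - {i}" using arc_exists[OF hu i] by blast
  have "v' = v" using xset_inj[of v' n v] arc_digrel(2)[OF a] hv xv xv' by simp
  then show "\<exists>l. arcA n l u v" using a by blast
qed


definition inE :: "nat \<Rightarrow> nat \<Rightarrow> nat \<Rightarrow> bool" where
  "inE n j i \<longleftrightarrow> (i \<le> j \<and> (\<forall>t. i \<le> t \<and> t < j \<longrightarrow> bit n t)) \<or> (j \<le> i \<and> (\<forall>t. j \<le> t \<and> t < i \<longrightarrow> \<not> bit n t))"

definition E :: "nat \<Rightarrow> nat \<Rightarrow> nat set" where
  "E n j = {i. 1 \<le> i \<and> inE n j i}"

definition rem :: "nat \<Rightarrow> nat set \<Rightarrow> nat \<Rightarrow> bool" where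
  "rem n X i \<longleftrightarrow> i \<in> X \<and> valid n (X - {i})"

lemma fence_finite: "finite (fence n)"
proof -
  have "fence n \<subseteq> {..n}"
  proof
    fix i assume "i \<in> fence n"
    then have "2^i \<le> n" by (simp add: fence_def)
    moreover have "i < 2^i" by (rule less_exp)
    ultimately have "i \<le> n" by linarith
    then show "i \<in> {..n}" by simp
  qed
  then show ?thesis by (rule finite_subset) simp
qed

lemma zero_bits_mod:
  assumes "i \<le> k" "\<forall>t. i \<le> t \<and> t < k \<longrightarrow> \<not> bit (n::nat) t"
  shows "n mod 2^k = n mod 2^i"
  using assms
proof (induction k)
  case 0 then show ?case by simp
next
  case (Suc k)
  show ?case
  proof (cases "i = Suc k")
    case True then show ?thesis by simp
  next
    case False
    then have ik: "i \<le> k" using Suc.prems by simp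
    then have "\<not> bit n k" using Suc.prems by simp
    then have "n mod 2^(Suc k) = n mod 2^k" using mod_Suc_bit[of n k] by simp
    also have "\<dots> = n mod 2^i" using Suc.IH ik Suc.prems by simp
    finally show ?thesis .
  qed
qed

lemma valid_Int: "valid n X \<Longrightarrow> valid n Y \<Longrightarrow> valid n (X \<inter> Y)"
  unfolding valid_def by blast

lemma E_fence: assumes "j \<in> fence n" shows "E n j \<subseteq> fence n"
proof
  fix i assume "i \<in> E n j"
  then have i1: "1 \<le> i" and ie: "inE n j i" by (auto simp: E_def)
  have jn: "2^j \<le> n" using assms by (simp add: fence_def)
  from ie show "i \<in> fence n"
    unfolding inE_def
  proof
    assume "i \<le> j \<and> (\<forall>t. i \<le> t \<and> t < j \<longrightarrow> bit n t)"
    then have "(2::nat)^i \<le> 2^j" by (simp add: power_increasing)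
    then have "2^i \<le> n" using jn by linarith
    then show ?thesis using i1 by (simp add: fence_def)
  next
    assume a: "j \<le> i \<and> (\<forall>t. j \<le> t \<and> t < i \<longrightarrow> \<not> bit n t)"
    have "2^i \<le> n"
    proof (rule ccontr)
      assume "\<not> 2^i \<le> n"
      then have "n mod 2^i = n" by simp
      moreover have "n mod 2^i = n mod 2^j" using zero_bits_mod[of j i n] a by simp
      moreover have "n mod 2^j < 2^j" by simp
      ultimately show False using jn by linarith
    qed
    then show ?thesis using i1 by (simp add: fence_def)
  qed
qed

lemma E_valid: assumes ev: "even n" and j: "j \<in> fence n" shows "valid n (E n j)"
  unfolding valid_def
proof (intro conjI allI impI)
  show "E n j \<subseteq> fence n" by (rule E_fence[OF j])
next
  fix t assume a: "t \<in> E n j \<and> \<not> bit n t"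
  then have t1: "1 \<le> t" and ie: "inE n j t" and nb: "\<not> bit n t" by (auto simp: E_def)
  have "inE n j (Suc t)"
  proof (cases "t < j")
    case True
    then have "\<forall>s. t \<le> s \<and> s < j \<longrightarrow> bit n s" using ie unfolding inE_def by auto
    then show ?thesis using nb True by auto
  next
    case False
    then have "\<forall>s. j \<le> s \<and> s < t \<longrightarrow> \<not> bit n s" using ie unfolding inE_def by auto
    then have "\<forall>s. j \<le> s \<and> s < Suc t \<longrightarrow> \<not> bit n s" using nb less_Suc_eq by auto
    then show ?thesis using False unfolding inE_def by auto
  qed
  then show "Suc t \<in> E n j" by (simp add: E_def)
next
  fix t assume a: "Suc t \<in> E n j \<and> bit n t"
  then have ie: "inE n j (Suc t)" and bt: "bit n t" by (auto simp: E_def)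
  have t1: "1 \<le> t" using bt ev by (cases t) (auto simp: bit_0)
  have "inE n j t"
  proof (cases "Suc t \<le> j")
    case True
    then have "\<forall>s. Suc t \<le> s \<and> s < j \<longrightarrow> bit n s" using ie unfolding inE_def by auto
    then have "\<forall>s. t \<le> s \<and> s < j \<longrightarrow> bit n s" using bt by (metis Suc_le_eq le_neq_implies_less)
    then show ?thesis using True unfolding inE_def by auto
  next
    case False
    then have "\<forall>s. j \<le> s \<and> s < Suc t \<longrightarrow> \<not> bit n s" using ie unfolding inE_def by auto
    then have "\<not> j \<le> t" using bt by auto
    then show ?thesis using False by simp
  qed
  then show "t \<in> E n j" using t1 by (simp add: E_def)
qed

lemma E_mem: "j \<in> fence n \<Longrightarrow> j \<in> E n j"
  by (auto simp: E_def inE_def fence_def)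

lemma E_least: assumes V: "valid n X" and jX: "j \<in> X" shows "E n j \<subseteq> X"
proof
  fix i assume "i \<in> E n j"
  then have ie: "inE n j i" by (simp add: E_def)
  from ie show "i \<in> X" unfolding inE_def
  proof
    assume a: "i \<le> j \<and> (\<forall>t. i \<le> t \<and> t < j \<longrightarrow> bit n t)"
    have "i \<le> j" using a by simp
    then show ?thesis
    proof (induction rule: inc_induct)
      case base then show ?case by (rule jX)
    next
      case (step m)
      then show ?case using validD(3)[OF V, of m] a by auto
    qed
  next
    assume a: "j \<le> i \<and> (\<forall>t. j \<le> t \<and> t < i \<longrightarrow> \<not> bit n t)"
    have "j \<le> i" using a by simp
    then show ?thesis
    proof (induction rule: dec_induct)
      case base then show ?case by (rule jX)
    next
      case (step m)
      then show ?case using validD(2)[OF V, of m] a by auto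
    qed
  qed
qed

lemma rem_iff: assumes V: "valid n X"
  shows "rem n X i \<longleftrightarrow> i \<in> X \<and> \<not> (\<exists>t. Suc t = i \<and> t \<in> X \<and> \<not> bit n t) \<and> \<not> (Suc i \<in> X \<and> bit n i)"
proof
  assume r: "rem n X i"
  then have iX: "i \<in> X" and V': "valid n (X - {i})" by (auto simp: rem_def)
  show "i \<in> X \<and> \<not> (\<exists>t. Suc t = i \<and> t \<in> X \<and> \<not> bit n t) \<and> \<not> (Suc i \<in> X \<and> bit n i)"
  proof (intro conjI notI)
    show "i \<in> X" by (rule iX)
    assume "\<exists>t. Suc t = i \<and> t \<in> X \<and> \<not> bit n t"
    then obtain t where "Suc t = i" "t \<in> X" "\<not> bit n t" by blast
    then show False using validD(2)[OF V', of t] by auto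
  next
    assume "Suc i \<in> X \<and> bit n i"
    then show False using validD(3)[OF V', of i] by auto
  qed
next
  assume a: "i \<in> X \<and> \<not> (\<exists>t. Suc t = i \<and> t \<in> X \<and> \<not> bit n t) \<and> \<not> (Suc i \<in> X \<and> bit n i)"
  have "valid n (X - {i})"
    unfolding valid_def
  proof (intro conjI allI impI)
    show "X - {i} \<subseteq> fence n" using validD(1)[OF V] by blast
  next
    fix t assume b: "t \<in> X - {i} \<and> \<not> bit n t"
    then have "Suc t \<in> X" using validD(2)[OF V, of t] by auto
    moreover have "Suc t \<noteq> i" using a b by auto
    ultimately show "Suc t \<in> X - {i}" by simp
  next
    fix t assume b: "Suc t \<in> X - {i} \<and> bit n t"
    then have "t \<in> X" using validD(3)[OF V, of t] by auto
    moreover have "t \<noteq> i" using a b by auto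
    ultimately show "t \<in> X - {i}" by simp
  qed
  then show "rem n X i" using a by (simp add: rem_def)
qed

lemma E_rem: assumes ev: "even n" and j: "j \<in> fence n" shows "rem n (E n j) j"
proof -
  have V: "valid n (E n j)" by (rule E_valid[OF ev j])
  have "\<not> (\<exists>t. Suc t = j \<and> t \<in> E n j \<and> \<not> bit n t)"
  proof
    assume "\<exists>t. Suc t = j \<and> t \<in> E n j \<and> \<not> bit n t"
    then obtain t where "Suc t = j" "inE n j t" "\<not> bit n t" by (auto simp: E_def)
    then show False unfolding inE_def by auto
  qed
  moreover have "\<not> (Suc j \<in> E n j \<and> bit n j)"
  proof
    assume "Suc j \<in> E n j \<and> bit n j"
    then have "inE n j (Suc j)" "bit n j" by (auto simp: E_def)
    then show False unfolding inE_def by auto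
  qed
  ultimately show ?thesis using rem_iff[OF V] E_mem[OF j] by blast
qed

lemma GE:
  assumes VX: "valid n X" and VY: "valid n Y" and sub: "Y \<subseteq> X" and ne: "Y \<noteq> X"
  shows "\<exists>i\<in>X - Y. rem n X i"
proof -
  define D where "D = X - Y"
  have fD: "finite D" unfolding D_def using validD(1)[OF VX] fence_finite finite_subset by blast
  have neD: "D \<noteq> {}" using sub ne unfolding D_def by blast
  define i0 where "i0 = Min D"
  have i0D: "i0 \<in> D" unfolding i0_def using fD neD by simp
  have i0min: "\<And>t. t \<in> D \<Longrightarrow> i0 \<le> t" unfolding i0_def using fD by simp
  have Lf: "t \<in> D" if "Suc t \<in> D" "t \<in> X" "\<not> bit n t" for t
  proof -
    have "t \<notin> Y" using validD(2)[OF VY, of t] that unfolding D_def by auto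
    then show ?thesis using that unfolding D_def by simp
  qed
  have Rf: "Suc t \<in> D" if "t \<in> D" "Suc t \<in> X" "bit n t" for t
  proof -
    have "Suc t \<notin> Y" using validD(3)[OF VY, of t] that unfolding D_def by auto
    then show ?thesis using that unfolding D_def by simp
  qed
  define R where "R = {j. i0 \<le> j \<and> (\<forall>t. i0 \<le> t \<and> t \<le> j \<longrightarrow> t \<in> D) \<and> (\<forall>t. i0 \<le> t \<and> t < j \<longrightarrow> bit n t)}"
  have RD: "R \<subseteq> D" unfolding R_def by auto
  have fR: "finite R" using RD fD finite_subset by blast
  have i0R: "i0 \<in> R" unfolding R_def using i0D by (auto simp: le_antisym)
  define j where "j = Max R"
  have jR: "j \<in> R" unfolding j_def using fR i0R by (metis Max_in empty_iff)
  have jmax: "\<And>t. t \<in> R \<Longrightarrow> t \<le> j" unfolding j_def using fR by simp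
  have jD: "j \<in> D" using jR RD by blast
  have jX: "j \<in> X" using jD unfolding D_def by simp
  have noL: "\<not> (\<exists>t. Suc t = j \<and> t \<in> X \<and> \<not> bit n t)"
  proof
    assume "\<exists>t. Suc t = j \<and> t \<in> X \<and> \<not> bit n t"
    then obtain t where t: "Suc t = j" "t \<in> X" "\<not> bit n t" by blast
    then have tD: "t \<in> D" using Lf jD by blast
    show False
    proof (cases "i0 \<le> t")
      case True
      then have "bit n t" using jR t(1) unfolding R_def by auto
      then show False using t by simp
    next
      case False then show False using i0min[OF tD] by simp
    qed
  qed
  have noR: "\<not> (Suc j \<in> X \<and> bit n j)"
  proof
    assume a: "Suc j \<in> X \<and> bit n j"
    then have sD: "Suc j \<in> D" using Rf jD by blast
    have "Suc j \<in> R" using jR sD a unfolding R_def by (auto simp: le_Suc_eq less_Suc_eq)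
    then show False using jmax by fastforce
  qed
  have "rem n X j" using rem_iff[OF VX] jX noL noR by blast
  then show ?thesis using jD unfolding D_def by blast
qed

lemma rem_unique_E:
  assumes V: "valid n X" and r: "rem n X i" and u: "\<And>i'. rem n X i' \<Longrightarrow> i' = i" and ev: "even n"
  shows "X = E n i"
proof -
  have iX: "i \<in> X" using r by (simp add: rem_def)
  have ifn: "i \<in> fence n" using iX validD(1)[OF V] by blast
  have sub: "E n i \<subseteq> X" by (rule E_least[OF V iX])
  show ?thesis
  proof (rule ccontr)
    assume "X \<noteq> E n i"
    then obtain i' where "i' \<in> X - E n i" "rem n X i'" using GE[OF V E_valid[OF ev ifn] sub] by blast
    then show False using u E_mem[OF ifn] by auto
  qed
qed

lemma E_rem_unique: assumes ev: "even n" and j: "j \<in> fence n" and r: "rem n (E n j) i" shows "i = j"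
proof (rule ccontr)
  assume ij: "i \<noteq> j"
  have V: "valid n (E n j - {i})" using r by (simp add: rem_def)
  have "j \<in> E n j - {i}" using E_mem[OF j] ij by simp
  then have "E n j \<subseteq> E n j - {i}" by (rule E_least[OF V])
  moreover have "i \<in> E n j" using r by (simp add: rem_def)
  ultimately show False by blast
qed


definition inB :: "(nat \<Rightarrow> bool) \<Rightarrow> nat \<Rightarrow> nat \<Rightarrow> bool" where
  "inB b j i \<longleftrightarrow> (i \<le> j \<and> (\<forall>t. i \<le> t \<and> t < j \<longrightarrow> b t)) \<or> (j \<le> i \<and> (\<forall>t. j \<le> t \<and> t < i \<longrightarrow> \<not> b t))"

lemma inB_Suc1: "inB b (Suc i) i \<longleftrightarrow> b i"
  unfolding inB_def by (auto simp: less_Suc_eq)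

lemma inB_Suc2: "inB b i (Suc i) \<longleftrightarrow> \<not> b i"
  unfolding inB_def by (auto simp: less_Suc_eq)

definition adj :: "(nat \<Rightarrow> bool) \<Rightarrow> nat \<Rightarrow> nat \<Rightarrow> nat \<Rightarrow> bool" where
  "adj b N i j \<longleftrightarrow> i \<noteq> j \<and> (inB b j i \<or> inB b i j) \<and>
     \<not> (\<exists>k\<in>{1..N}. k \<noteq> i \<and> k \<noteq> j \<and> ((inB b k i \<and> inB b j k) \<or> (inB b k j \<and> inB b i k)))"

lemma adj_sym: "adj b N i j \<longleftrightarrow> adj b N j i"
  unfolding adj_def by blast

lemma no_between:
  assumes "k \<noteq> i" "k \<noteq> Suc i"
  shows "\<not> (inB b k i \<and> inB b (Suc i) k)" "\<not> (inB b k (Suc i) \<and> inB b i k)"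
proof -
  show "\<not> (inB b k i \<and> inB b (Suc i) k)"
  proof
    assume a: "inB b k i \<and> inB b (Suc i) k"
    show False
    proof (cases "i \<le> k")
      case True
      then have k2: "Suc (Suc i) \<le> k" using assms by simp
      then have "b (Suc i)" using a unfolding inB_def by auto
      moreover have "\<not> b (Suc i)" using a k2 unfolding inB_def by auto
      ultimately show False by simp
    next
      case False
      then have "\<not> b k" using a unfolding inB_def by auto
      moreover have "b k" using a False unfolding inB_def by auto
      ultimately show False by simp
    qed
  qed
  show "\<not> (inB b k (Suc i) \<and> inB b i k)"
  proof
    assume a: "inB b k (Suc i) \<and> inB b i k"
    show False
    proof (cases "i \<le> k")
      case True
      then have k2: "Suc (Suc i) \<le> k" using assms by simp
      then have "\<not> b (Suc i)" using a unfolding inB_def by auto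
      moreover have "b (Suc i)" using a k2 unfolding inB_def by auto
      ultimately show False by simp
    next
      case False
      then have "b k" using a unfolding inB_def by auto
      moreover have "\<not> b k" using a False unfolding inB_def by auto
      ultimately show False by simp
    qed
  qed
qed

lemma adj_Suc: "adj b N i (Suc i)"
  unfolding adj_def
proof (intro conjI)
  show "i \<noteq> Suc i" by simp
  show "inB b (Suc i) i \<or> inB b i (Suc i)" by (cases "b i") (simp_all add: inB_Suc1 inB_Suc2)
  show "\<not> (\<exists>k\<in>{1..N}. k \<noteq> i \<and> k \<noteq> Suc i \<and> ((inB b k i \<and> inB b (Suc i) k) \<or> (inB b k (Suc i) \<and> inB b i k)))"
  proof
    assume "\<exists>k\<in>{1..N}. k \<noteq> i \<and> k \<noteq> Suc i \<and> ((inB b k i \<and> inB b (Suc i) k) \<or> (inB b k (Suc i) \<and> inB b i k))"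
    then obtain k where "k \<noteq> i" "k \<noteq> Suc i" "(inB b k i \<and> inB b (Suc i) k) \<or> (inB b k (Suc i) \<and> inB b i k)" by blast
    then show False using no_between[of k i b] by blast
  qed
qed

lemma adj_far:
  assumes ij: "Suc i < j" and r: "1 \<le> i" "j \<le> N"
  shows "\<not> adj b N i j"
proof
  assume a: "adj b N i j"
  have k: "Suc i \<in> {1..N}" "Suc i \<noteq> i" "Suc i \<noteq> j" using ij r by auto
  have "inB b j i \<or> inB b i j" using a unfolding adj_def by blast
  then show False
  proof
    assume "inB b j i"
    then have bt: "\<forall>t. i \<le> t \<and> t < j \<longrightarrow> b t" using ij unfolding inB_def by auto
    have "inB b (Suc i) i" using bt ij unfolding inB_def by auto
    moreover have "inB b j (Suc i)" using bt ij unfolding inB_def by auto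
    ultimately show False using a k unfolding adj_def by blast
  next
    assume "inB b i j"
    then have bt: "\<forall>t. i \<le> t \<and> t < j \<longrightarrow> \<not> b t" using ij unfolding inB_def by auto
    have "inB b (Suc i) j" using bt ij unfolding inB_def by auto
    moreover have "inB b i (Suc i)" using bt ij unfolding inB_def by auto
    ultimately show False using a k unfolding adj_def by blast
  qed
qed

lemma adj_iff:
  assumes "i \<in> {1..N}" "j \<in> {1..N}"
  shows "adj b N i j \<longleftrightarrow> (j = Suc i \<or> i = Suc j)"
proof
  assume a: "adj b N i j"
  have "i \<noteq> j" using a by (simp add: adj_def)
  show "j = Suc i \<or> i = Suc j"
  proof (rule ccontr)
    assume n: "\<not> (j = Suc i \<or> i = Suc j)"
    show False
    proof (cases "i < j")
      case True then have "Suc i < j" using n by simp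
      then show False using adj_far[of i j N b] a assms by auto
    next
      case False then have "Suc j < i" using n \<open>i \<noteq> j\<close> by simp
      then show False using adj_far[of j i N b] a assms adj_sym by auto
    qed
  qed
next
  assume "j = Suc i \<or> i = Suc j"
  then show "adj b N i j" using adj_Suc adj_sym by blast
qed

definition nb :: "nat \<Rightarrow> nat \<Rightarrow> bool" where "nb i j \<longleftrightarrow> j = Suc i \<or> i = Suc j"

lemma path_id:
  assumes into: "\<And>i. i \<in> {1..N} \<Longrightarrow> s i \<in> {1..N}" and inj: "inj_on s {1..N}"
    and pres: "\<And>i j. i \<in> {1..N} \<Longrightarrow> j \<in> {1..N} \<Longrightarrow> nb i j \<Longrightarrow> nb (s i) (s j)"
    and s1: "s 1 = 1"
  shows "\<forall>i\<in>{1..N}. s i = i"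
proof -
  have "\<forall>k. 1 \<le> k \<and> k \<le> i \<longrightarrow> s k = k" if "i \<le> N" for i
    using that
  proof (induction i)
    case 0 then show ?case by simp
  next
    case (Suc i)
    show ?case
    proof (cases "i = 0")
      case True then show ?thesis using s1 by auto
    next
      case False
      have IH: "\<forall>k. 1 \<le> k \<and> k \<le> i \<longrightarrow> s k = k" using Suc by simp
      have si: "s i = i" using IH False by simp
      have "nb (s i) (s (Suc i))" using pres[of i "Suc i"] Suc.prems False by (simp add: nb_def)
      then have c: "s (Suc i) = Suc i \<or> i = Suc (s (Suc i))" using si by (simp add: nb_def)
      have "s (Suc i) = Suc i"
      proof (rule ccontr)
        assume "s (Suc i) \<noteq> Suc i"
        then have e: "s (Suc i) = i - 1" and i2: "i \<ge> 1" using c by auto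
        have "s (Suc i) \<ge> 1" using into[of "Suc i"] Suc.prems by simp
        then have i2': "i \<ge> 2" using e by simp
        then have "s (i - 1) = i - 1" using IH by simp
        then have "s (Suc i) = s (i - 1)" using e by simp
        moreover have "Suc i \<in> {1..N}" "i - 1 \<in> {1..N}" using Suc.prems i2' by auto
        ultimately have "Suc i = i - 1" using inj by (meson inj_on_contraD)
        then show False by simp
      qed
      then show ?thesis using IH le_Suc_eq by auto
    qed
  qed
  then show ?thesis by auto
qed

lemma path_auto:
  assumes into: "\<And>i. i \<in> {1..N} \<Longrightarrow> s i \<in> {1..N}" and inj: "inj_on s {1..N}"
    and pres: "\<And>i j. i \<in> {1..N} \<Longrightarrow> j \<in> {1..N} \<Longrightarrow> nb i j \<longleftrightarrow> nb (s i) (s j)"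
    and N1: "1 \<le> N"
  shows "(\<forall>i\<in>{1..N}. s i = i) \<or> (\<forall>i\<in>{1..N}. s i = Suc N - i)"
proof -
  have sur: "s ` {1..N} = {1..N}"
    using into inj by (intro endo_inj_surj) auto
  have end1: "s 1 = 1 \<or> s 1 = N"
  proof (rule ccontr)
    assume "\<not> (s 1 = 1 \<or> s 1 = N)"
    moreover have "s 1 \<in> {1..N}" using into N1 by simp
    ultimately have m: "1 < s 1" "s 1 < N" by auto
    have "s 1 - 1 \<in> {1..N}" using m by auto
    then have "s 1 - 1 \<in> s ` {1..N}" unfolding sur .
    then obtain a where a: "a \<in> {1..N}" "s a = s 1 - 1" by (auto elim!: imageE)
    have "Suc (s 1) \<in> {1..N}" using m by auto
    then have "Suc (s 1) \<in> s ` {1..N}" unfolding sur .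
    then obtain c where c: "c \<in> {1..N}" "s c = Suc (s 1)" by (auto elim!: imageE)
    have "nb (s a) (s 1)" "nb (s c) (s 1)" using a c m by (auto simp: nb_def)
    then have "nb a 1" "nb c 1" using pres[of a 1] pres[of c 1] a c N1 by auto
    then have "a = 2" "c = 2" using a c by (auto simp: nb_def)
    then show False using a c m by simp
  qed
  show ?thesis
  proof (cases "s 1 = 1")
    case True
    have p1: "nb (s i) (s j)" if "i \<in> {1..N}" "j \<in> {1..N}" "nb i j" for i j
      using pres[OF that(1,2)] that(3) by simp
    show ?thesis using path_id[OF into inj p1 True] by blast
  next
    case False
    then have sN: "s 1 = N" using end1 by simp
    define s' where "s' i = Suc N - s i" for i
    have into': "s' i \<in> {1..N}" if "i \<in> {1..N}" for i using into[OF that] unfolding s'_def by auto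
    have inj': "inj_on s' {1..N}"
    proof (rule inj_onI)
      fix x y assume "x \<in> {1..N}" "y \<in> {1..N}" "s' x = s' y"
      moreover have "s x \<le> N" "s y \<le> N" using into \<open>x \<in> {1..N}\<close> \<open>y \<in> {1..N}\<close> by auto
      ultimately have "s x = s y" unfolding s'_def by simp
      then show "x = y" using inj \<open>x \<in> {1..N}\<close> \<open>y \<in> {1..N}\<close> by (meson inj_on_contraD)
    qed
    have pres': "nb (s' i) (s' j)" if "i \<in> {1..N}" "j \<in> {1..N}" "nb i j" for i j
    proof -
      have "nb (s i) (s j)" using pres that by blast
      moreover have "s i \<in> {1..N}" "s j \<in> {1..N}" using into that by auto
      ultimately show ?thesis unfolding s'_def nb_def by auto
    qed
    have s'1: "s' 1 = 1" using sN N1 unfolding s'_def by simp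
    have "\<forall>i\<in>{1..N}. s' i = i" using path_id[of N s', OF into' inj' pres' s'1] .
    have "\<forall>i\<in>{1..N}. s i = Suc N - i"
    proof
      fix i assume i: "i \<in> {1..N}"
      then have "Suc N - s i = i" using \<open>\<forall>i\<in>{1..N}. s' i = i\<close> unfolding s'_def by simp
      moreover have "s i \<le> N" using into[OF i] by simp
      ultimately show "s i = Suc N - i" by simp
    qed
    then show ?thesis by blast
  qed
qed

lemma alternating:
  assumes alt: "\<And>i. 1 \<le> i \<Longrightarrow> i < N \<Longrightarrow> b i \<longleftrightarrow> \<not> b (Suc i)" and b1: "b 1"
  shows "\<forall>i. 1 \<le> i \<and> i \<le> N \<longrightarrow> (b i \<longleftrightarrow> odd i)"
proof (intro allI impI)
  fix i assume "1 \<le> i \<and> i \<le> N"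
  then show "b i \<longleftrightarrow> odd i"
  proof (induction i)
    case 0 then show ?case by simp
  next
    case (Suc i)
    show ?case
    proof (cases "i = 0")
      case True then show ?thesis using b1 by simp
    next
      case False
      then have "b i \<longleftrightarrow> odd i" using Suc by simp
      moreover have "b i \<longleftrightarrow> \<not> b (Suc i)" using alt[of i] Suc.prems False by simp
      ultimately show ?thesis by simp
    qed
  qed
qed

lemma finale:
  fixes b1 b2 :: "nat \<Rightarrow> bool"
  assumes into: "\<And>i. i \<in> {1..N} \<Longrightarrow> p i \<in> {1..N}" and inj: "inj_on p {1..N}"
    and lab: "\<And>i. i \<in> {1..N} \<Longrightarrow> b1 i = b2 (p i)"
    and ord: "\<And>i j. i \<in> {1..N} \<Longrightarrow> j \<in> {1..N} \<Longrightarrow> inB b1 j i \<longleftrightarrow> inB b2 (p j) (p i)"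
    and top1: "1 \<le> N \<Longrightarrow> b1 N" and top2: "1 \<le> N \<Longrightarrow> b2 N"
  shows "\<forall>i\<in>{1..N}. b1 i = b2 i"
proof (cases "1 \<le> N")
  case False then show ?thesis by simp
next
  case N1: True
  have sur: "p ` {1..N} = {1..N}"
    using into inj by (intro endo_inj_surj) auto
  have adjp: "adj b1 N i j \<longleftrightarrow> adj b2 N (p i) (p j)" if "i \<in> {1..N}" "j \<in> {1..N}" for i j
  proof -
    have inj_eq: "p x = p y \<longleftrightarrow> x = y" if "x \<in> {1..N}" "y \<in> {1..N}" for x y
      using inj_on_eq_iff[OF inj that] .
    have ex: "(\<exists>k\<in>{1..N}. k \<noteq> i \<and> k \<noteq> j \<and> ((inB b1 k i \<and> inB b1 j k) \<or> (inB b1 k j \<and> inB b1 i k)))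
      \<longleftrightarrow> (\<exists>k\<in>{1..N}. k \<noteq> p i \<and> k \<noteq> p j \<and> ((inB b2 k (p i) \<and> inB b2 (p j) k) \<or> (inB b2 k (p j) \<and> inB b2 (p i) k)))"
    proof
      assume "\<exists>k\<in>{1..N}. k \<noteq> i \<and> k \<noteq> j \<and> ((inB b1 k i \<and> inB b1 j k) \<or> (inB b1 k j \<and> inB b1 i k))"
      then obtain k where k: "k \<in> {1..N}" "k \<noteq> i" "k \<noteq> j" "(inB b1 k i \<and> inB b1 j k) \<or> (inB b1 k j \<and> inB b1 i k)" by blast
      have "p k \<noteq> p i" "p k \<noteq> p j" using k inj_eq[OF k(1) that(1)] inj_eq[OF k(1) that(2)] by auto
      moreover have "(inB b2 (p k) (p i) \<and> inB b2 (p j) (p k)) \<or> (inB b2 (p k) (p j) \<and> inB b2 (p i) (p k))"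
        using k(4) ord[OF that(1) k(1)] ord[OF k(1) that(2)] ord[OF that(2) k(1)] ord[OF k(1) that(1)] by simp
      ultimately show "\<exists>k\<in>{1..N}. k \<noteq> p i \<and> k \<noteq> p j \<and> ((inB b2 k (p i) \<and> inB b2 (p j) k) \<or> (inB b2 k (p j) \<and> inB b2 (p i) k))"
        using into[OF k(1)] by blast
    next
      assume "\<exists>k\<in>{1..N}. k \<noteq> p i \<and> k \<noteq> p j \<and> ((inB b2 k (p i) \<and> inB b2 (p j) k) \<or> (inB b2 k (p j) \<and> inB b2 (p i) k))"
      then obtain k' where k': "k' \<in> {1..N}" "k' \<noteq> p i" "k' \<noteq> p j" "(inB b2 k' (p i) \<and> inB b2 (p j) k') \<or> (inB b2 k' (p j) \<and> inB b2 (p i) k')" by blast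
      obtain k where k: "k \<in> {1..N}" "k' = p k" using sur k'(1) by blast
      have "k \<noteq> i" "k \<noteq> j" using k k' by blast+
      moreover have "(inB b1 k i \<and> inB b1 j k) \<or> (inB b1 k j \<and> inB b1 i k)"
        using k'(4) ord[OF that(1) k(1)] ord[OF k(1) that(2)] ord[OF that(2) k(1)] ord[OF k(1) that(1)] unfolding k(2) by simp
      ultimately show "\<exists>k\<in>{1..N}. k \<noteq> i \<and> k \<noteq> j \<and> ((inB b1 k i \<and> inB b1 j k) \<or> (inB b1 k j \<and> inB b1 i k))"
        using k(1) by blast
    qed
    have "(inB b1 j i \<or> inB b1 i j) \<longleftrightarrow> (inB b2 (p j) (p i) \<or> inB b2 (p i) (p j))" using ord[OF that] ord[OF that(2,1)] by simp
    then show ?thesis unfolding adj_def using ex inj_eq[OF that] by blast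
  qed
  have pres: "nb i j \<longleftrightarrow> nb (p i) (p j)" if "i \<in> {1..N}" "j \<in> {1..N}" for i j
    using adjp[OF that] adj_iff[OF that] adj_iff[OF into[OF that(1)] into[OF that(2)]] unfolding nb_def by blast
  have "(\<forall>i\<in>{1..N}. p i = i) \<or> (\<forall>i\<in>{1..N}. p i = Suc N - i)"
    by (rule path_auto[OF into inj pres N1])
  then show ?thesis
  proof
    assume "\<forall>i\<in>{1..N}. p i = i"
    then show ?thesis using lab by simp
  next
    assume rv: "\<forall>i\<in>{1..N}. p i = Suc N - i"
    have alt: "b1 i \<longleftrightarrow> \<not> b1 (Suc i)" if "1 \<le> i" "i < N" for i
    proof -
      have r: "i \<in> {1..N}" "Suc i \<in> {1..N}" using that by auto
      have "b1 i \<longleftrightarrow> inB b1 (Suc i) i" by (simp add: inB_Suc1)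
      also have "\<dots> \<longleftrightarrow> inB b2 (p (Suc i)) (p i)" using ord[OF r] by simp
      also have "p (Suc i) = N - i" "p i = Suc (N - i)" using rv r that by auto
      then have "inB b2 (p (Suc i)) (p i) \<longleftrightarrow> \<not> b2 (N - i)" by (simp add: inB_Suc2)
      also have "b2 (N - i) = b1 (Suc i)" using lab[of "Suc i"] r \<open>p (Suc i) = N - i\<close> by simp
      finally show ?thesis .
    qed
    have "b1 1 = b2 N" using lab[of 1] rv N1 by simp
    then have b11: "b1 1" using top2 N1 by simp
    have od: "\<forall>i. 1 \<le> i \<and> i \<le> N \<longrightarrow> (b1 i \<longleftrightarrow> odd i)" using alternating[of N b1, OF alt b11] .
    then have oN: "odd N" using top1 N1 by simp
    show ?thesis
    proof
      fix i assume i: "i \<in> {1..N}"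
      then have j: "Suc N - i \<in> {1..N}" by auto
      have "b2 i = b2 (p (Suc N - i))" using rv j i by auto
      also have "\<dots> = b1 (Suc N - i)" using lab[OF j] by simp
      also have "\<dots> = odd (Suc N - i)" using od j by auto
      also have "\<dots> = odd i" using oN i by auto
      also have "\<dots> = b1 i" using od i by auto
      finally show "b1 i = b2 i" by simp
    qed
  qed
qed


definition reach :: "nat \<Rightarrow> nat list \<Rightarrow> nat list \<Rightarrow> bool" where
  "reach n = (\<lambda>u v. \<exists>l. arcA n l u v)\<^sup>*\<^sup>*"

lemma reach_sub: assumes r: "reach n u v" and hu: "u \<in> hyperbinary n"
  shows "v \<in> hyperbinary n \<and> xset v \<subseteq> xset u"
  using r[unfolded reach_def]
proof (induction rule: rtranclp_induct)
  case base then show ?case using hu by simp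
next
  case (step y z)
  then obtain l where a: "arcA n l y z" by blast
  obtain i where "xset z = xset y - {i}" using arc_xset[OF a] by blast
  then show ?case using step.IH arc_digrel(2)[OF a] by blast
qed

lemma sub_reach:
  assumes hu: "u \<in> hyperbinary n" and hv: "v \<in> hyperbinary n" and s: "xset v \<subseteq> xset u"
  shows "reach n u v"
proof -
  have "\<forall>u. u \<in> hyperbinary n \<and> xset v \<subseteq> xset u \<and> card (xset u - xset v) = k \<longrightarrow> reach n u v" for k
  proof (induction k)
    case 0
    show ?case
    proof (intro allI impI)
      fix u assume a: "u \<in> hyperbinary n \<and> xset v \<subseteq> xset u \<and> card (xset u - xset v) = 0"
      have fin: "finite (xset u - xset v)" using xset_fence[of u n] a fence_finite finite_subset by blast
      then have "xset u = xset v" using a by auto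
      then have "u = v" using xset_inj[of u n v] a hv by simp
      then show "reach n u v" by (simp add: reach_def)
    qed
  next
    case (Suc k)
    show ?case
    proof (intro allI impI)
      fix u assume a: "u \<in> hyperbinary n \<and> xset v \<subseteq> xset u \<and> card (xset u - xset v) = Suc k"
      have hu: "u \<in> hyperbinary n" using a by simp
      have fin: "finite (xset u - xset v)" using xset_fence[OF hu] fence_finite finite_subset by blast
      have ne: "xset v \<noteq> xset u" using a by auto
      obtain i where i: "i \<in> xset u - xset v" and r: "rem n (xset u) i"
        using GE[OF valid_xset[OF hu] valid_xset[OF hv]] a ne by blast
      obtain u' where au: "arcA n (lab n i) u u'" and xu: "xset u' = xset u - {i}"
        using arc_exists[OF hu] i r by (auto simp: rem_def)
      have hu': "u' \<in> hyperbinary n" using arc_digrel(2)[OF au] .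
      have "xset u' - xset v = (xset u - xset v) - {i}" using xu by auto
      then have "card (xset u' - xset v) = k" using a i fin by simp
      moreover have "xset v \<subseteq> xset u'" using xu a i by auto
      ultimately have "reach n u' v" using Suc.IH hu' by blast
      then have r1: "(\<lambda>u v. \<exists>l. arcA n l u v)\<^sup>*\<^sup>* u' v" by (simp add: reach_def)
      have "(\<lambda>u v. \<exists>l. arcA n l u v)\<^sup>*\<^sup>* u v" by (rule converse_rtranclp_into_rtranclp[OF _ r1]) (use au in blast)
      then show "reach n u v" by (simp add: reach_def)
    qed
  qed
  then show ?thesis using hu s by blast
qed

lemma reach_iff: "u \<in> hyperbinary n \<Longrightarrow> v \<in> hyperbinary n \<Longrightarrow> reach n u v \<longleftrightarrow> xset v \<subseteq> xset u"
  using reach_sub sub_reach by blast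

definition ji :: "nat \<Rightarrow> nat list \<Rightarrow> bool" where
  "ji n u \<longleftrightarrow> (\<exists>!v. \<exists>l. arcA n l u v)"

lemma ji_iff: assumes hu: "u \<in> hyperbinary n"
  shows "ji n u \<longleftrightarrow> (\<exists>!i. rem n (xset u) i)"
proof
  assume "ji n u"
  then obtain v where v: "\<exists>l. arcA n l u v" and vu: "\<And>w. (\<exists>l. arcA n l u w) \<Longrightarrow> w = v" unfolding ji_def by blast
  obtain i where hv: "v \<in> hyperbinary n" and i: "i \<in> xset u" and xv: "xset v = xset u - {i}"
    using out_char[OF hu] v by blast
  have ri: "rem n (xset u) i" using i xv valid_xset[OF hv] by (simp add: rem_def)
  show "\<exists>!i. rem n (xset u) i"
  proof (rule ex1I[of _ i])
    show "rem n (xset u) i" by (rule ri)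
    fix i' assume r': "rem n (xset u) i'"
    then have "valid n (xset u - {i'})" by (simp add: rem_def)
    then obtain w where hw: "w \<in> hyperbinary n" and xw: "xset w = xset u - {i'}"
      using exists_word by blast
    have "\<exists>l. arcA n l u w" using out_char[OF hu] hw xw r' by (auto simp: rem_def)
    then have "w = v" by (rule vu)
    then have "xset u - {i'} = xset u - {i}" using xw xv by simp
    then show "i' = i" using i r' by (auto simp: rem_def)
  qed
next
  assume "\<exists>!i. rem n (xset u) i"
  then obtain i where ri: "rem n (xset u) i" and iu: "\<And>i'. rem n (xset u) i' \<Longrightarrow> i' = i" by blast
  have "valid n (xset u - {i})" using ri by (simp add: rem_def)
  then obtain v where hv: "v \<in> hyperbinary n" and xv: "xset v = xset u - {i}"
    using exists_word by blast
  show "ji n u" unfolding ji_def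
  proof (rule ex1I[of _ v])
    show "\<exists>l. arcA n l u v" using out_char[OF hu] hv xv ri by (auto simp: rem_def)
    fix w assume "\<exists>l. arcA n l u w"
    then obtain i' where hw: "w \<in> hyperbinary n" and i': "i' \<in> xset u" and xw: "xset w = xset u - {i'}"
      using out_char[OF hu] by blast
    have "rem n (xset u) i'" using i' xw valid_xset[OF hw] by (simp add: rem_def)
    then have "i' = i" by (rule iu)
    then show "w = v" using xset_inj[OF hw hv] xw xv by simp
  qed
qed

definition isoP :: "nat \<Rightarrow> nat \<Rightarrow> (nat list \<Rightarrow> nat list) \<Rightarrow> bool" where
  "isoP m n \<phi> \<longleftrightarrow> bij_betw \<phi> (hyperbinary m) (hyperbinary n) \<and>
     (\<forall>l. \<forall>u\<in>hyperbinary m. \<forall>v\<in>hyperbinary m. arcA m l u v \<longleftrightarrow> arcA n l (\<phi> u) (\<phi> v))"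

lemma A_iso_isoP: "A_iso m n \<longleftrightarrow> (\<exists>\<phi>. isoP m n \<phi>)"
  unfolding A_iso_def isoP_def by simp

lemma isoP_inv: assumes "isoP m n \<phi>" shows "isoP n m (inv_into (hyperbinary m) \<phi>)"
proof -
  have b: "bij_betw \<phi> (hyperbinary m) (hyperbinary n)" and a: "\<And>l u v. u \<in> hyperbinary m \<Longrightarrow> v \<in> hyperbinary m \<Longrightarrow> arcA m l u v \<longleftrightarrow> arcA n l (\<phi> u) (\<phi> v)"
    using assms unfolding isoP_def by auto
  let ?g = "inv_into (hyperbinary m) \<phi>"
  have b': "bij_betw ?g (hyperbinary n) (hyperbinary m)" by (rule bij_betw_inv_into[OF b])
  have gi: "\<phi> (?g x) = x" if "x \<in> hyperbinary n" for x using b that by (simp add: bij_betw_inv_into_right)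
  have gm: "?g x \<in> hyperbinary m" if "x \<in> hyperbinary n" for x using b' that by (simp add: bij_betw_apply)
  show ?thesis unfolding isoP_def
  proof (intro conjI allI ballI)
    show "bij_betw ?g (hyperbinary n) (hyperbinary m)" by (rule b')
    fix l u v assume "u \<in> hyperbinary n" "v \<in> hyperbinary n"
    then show "arcA n l u v \<longleftrightarrow> arcA m l (?g u) (?g v)" using a[OF gm gm] gi by simp
  qed
qed

lemma isoP_comp: assumes "isoP m n \<phi>" "isoP n k \<psi>" shows "isoP m k (\<psi> \<circ> \<phi>)"
proof -
  have b1: "bij_betw \<phi> (hyperbinary m) (hyperbinary n)" and a1: "\<And>l u v. u \<in> hyperbinary m \<Longrightarrow> v \<in> hyperbinary m \<Longrightarrow> arcA m l u v \<longleftrightarrow> arcA n l (\<phi> u) (\<phi> v)"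
    using assms(1) unfolding isoP_def by auto
  have b2: "bij_betw \<psi> (hyperbinary n) (hyperbinary k)" and a2: "\<And>l u v. u \<in> hyperbinary n \<Longrightarrow> v \<in> hyperbinary n \<Longrightarrow> arcA n l u v \<longleftrightarrow> arcA k l (\<psi> u) (\<psi> v)"
    using assms(2) unfolding isoP_def by auto
  show ?thesis unfolding isoP_def
  proof (intro conjI allI ballI)
    show "bij_betw (\<psi> \<circ> \<phi>) (hyperbinary m) (hyperbinary k)" by (rule bij_betw_trans[OF b1 b2])
    fix l u v assume u: "u \<in> hyperbinary m" and v: "v \<in> hyperbinary m"
    have "\<phi> u \<in> hyperbinary n" "\<phi> v \<in> hyperbinary n" using b1 u v by (auto simp: bij_betw_apply)
    then show "arcA m l u v \<longleftrightarrow> arcA k l ((\<psi> \<circ> \<phi>) u) ((\<psi> \<circ> \<phi>) v)" using a1[OF u v] a2 by simp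
  qed
qed

lemma isoP_id: "isoP n n id"
  unfolding isoP_def by simp

lemma isoP_reach: assumes iso: "isoP m n \<phi>" and hu: "u \<in> hyperbinary m" and r: "reach m u v"
  shows "reach n (\<phi> u) (\<phi> v)"
proof -
  have a: "\<And>l u v. u \<in> hyperbinary m \<Longrightarrow> v \<in> hyperbinary m \<Longrightarrow> arcA m l u v \<longleftrightarrow> arcA n l (\<phi> u) (\<phi> v)"
    using iso unfolding isoP_def by auto
  show ?thesis using r[unfolded reach_def]
  proof (induction rule: rtranclp_induct)
    case base then show ?case by (simp add: reach_def)
  next
    case (step y z)
    then obtain l where ayz: "arcA m l y z" by blast
    have "y \<in> hyperbinary m" "z \<in> hyperbinary m" using arc_digrel[OF ayz] by auto
    then have "arcA n l (\<phi> y) (\<phi> z)" using a ayz by blast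
    have IH: "(\<lambda>u v. \<exists>l. arcA n l u v)\<^sup>*\<^sup>* (\<phi> u) (\<phi> y)" using step.IH by (simp add: reach_def)
    have "(\<lambda>u v. \<exists>l. arcA n l u v)\<^sup>*\<^sup>* (\<phi> u) (\<phi> z)"
      by (rule rtranclp.rtrancl_into_rtrancl[OF IH]) (use \<open>arcA n l (\<phi> y) (\<phi> z)\<close> in blast)
    then show ?case by (simp add: reach_def)
  qed
qed

lemma isoP_ji: assumes iso: "isoP m n \<phi>" and hu: "u \<in> hyperbinary m" and j: "ji m u"
  shows "ji n (\<phi> u)"
proof -
  have b: "bij_betw \<phi> (hyperbinary m) (hyperbinary n)" and a: "\<And>l u v. u \<in> hyperbinary m \<Longrightarrow> v \<in> hyperbinary m \<Longrightarrow> arcA m l u v \<longleftrightarrow> arcA n l (\<phi> u) (\<phi> v)"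
    using iso unfolding isoP_def by auto
  obtain v where v: "\<exists>l. arcA m l u v" and vu: "\<And>w. (\<exists>l. arcA m l u w) \<Longrightarrow> w = v" using j unfolding ji_def by blast
  obtain l where al: "arcA m l u v" using v by blast
  have hv: "v \<in> hyperbinary m" using arc_digrel(2)[OF al] .
  show ?thesis unfolding ji_def
  proof (rule ex1I[of _ "\<phi> v"])
    show "\<exists>l. arcA n l (\<phi> u) (\<phi> v)" using a[OF hu hv] al by blast
    fix w assume "\<exists>l. arcA n l (\<phi> u) w"
    then obtain l' where aw: "arcA n l' (\<phi> u) w" by blast
    have "w \<in> hyperbinary n" using arc_digrel(2)[OF aw] .
    then obtain w' where w': "w' \<in> hyperbinary m" "w = \<phi> w'" using b by (auto simp: bij_betw_def)
    then have "arcA m l' u w'" using a[OF hu w'(1)] aw by simp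
    then have "w' = v" using vu by blast
    then show "w = \<phi> v" using w' by simp
  qed
qed


lemma inE_inB: "inE n = inB (bit n)"
  by (intro ext) (simp add: inE_def inB_def)

lemma E_sub_iff: assumes ev: "even n" and i: "i \<in> fence n" and j: "j \<in> fence n"
  shows "E n i \<subseteq> E n j \<longleftrightarrow> i \<in> E n j"
  using E_mem[OF i] E_least[OF E_valid[OF ev j]] by blast

lemma pv_ex: assumes ev: "even n" and i: "i \<in> fence n"
  shows "\<exists>!u. u \<in> hyperbinary n \<and> xset u = E n i"
proof -
  obtain u where "u \<in> hyperbinary n" "xset u = E n i" using exists_word[OF E_valid[OF ev i]] by blast
  then show ?thesis using xset_inj by blast
qed

definition pv :: "nat \<Rightarrow> nat \<Rightarrow> nat list" where
  "pv n i = (THE u. u \<in> hyperbinary n \<and> xset u = E n i)"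

lemma pv: assumes ev: "even n" and i: "i \<in> fence n"
  shows "pv n i \<in> hyperbinary n" "xset (pv n i) = E n i"
  using theI'[OF pv_ex[OF ev i]] unfolding pv_def by auto

lemma pv_ji: assumes ev: "even n" and i: "i \<in> fence n" shows "ji n (pv n i)"
proof -
  have "\<exists>!j. rem n (E n i) j" using E_rem[OF ev i] E_rem_unique[OF ev i] by blast
  then show ?thesis using ji_iff[OF pv(1)[OF ev i]] pv(2)[OF ev i] by simp
qed

lemma ji_E: assumes ev: "even n" and hu: "u \<in> hyperbinary n" and j: "ji n u"
  shows "\<exists>i\<in>fence n. xset u = E n i"
proof -
  obtain i where r: "rem n (xset u) i" and un: "\<And>i'. rem n (xset u) i' \<Longrightarrow> i' = i"
    using j ji_iff[OF hu] by blast
  have "xset u = E n i" by (rule rem_unique_E[OF valid_xset[OF hu] r un ev])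
  moreover have "i \<in> fence n" using r xset_fence[OF hu] by (auto simp: rem_def)
  ultimately show ?thesis by blast
qed

lemma lab_inj: "lab m i = lab n j \<longleftrightarrow> (bit m i \<longleftrightarrow> bit n j)"
  by (simp add: lab_def)

lemma transfer:
  assumes iso: "isoP m n \<phi>" and em: "even m" and en: "even n"
  shows "\<exists>p. (\<forall>i\<in>fence m. p i \<in> fence n) \<and> inj_on p (fence m) \<and>
     (\<forall>i\<in>fence m. bit m i = bit n (p i)) \<and>
     (\<forall>i\<in>fence m. \<forall>j\<in>fence m. inE m j i \<longleftrightarrow> inE n (p j) (p i))"
proof -
  have b: "bij_betw \<phi> (hyperbinary m) (hyperbinary n)" and a: "\<And>l u v. u \<in> hyperbinary m \<Longrightarrow> v \<in> hyperbinary m \<Longrightarrow> arcA m l u v \<longleftrightarrow> arcA n l (\<phi> u) (\<phi> v)"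
    using iso unfolding isoP_def by auto
  have iso': "isoP n m (inv_into (hyperbinary m) \<phi>)" by (rule isoP_inv[OF iso])
  have inv1: "inv_into (hyperbinary m) \<phi> (\<phi> u) = u" if "u \<in> hyperbinary m" for u
    using b that by (simp add: bij_betw_inv_into_left)
  have phiH: "\<phi> u \<in> hyperbinary n" if "u \<in> hyperbinary m" for u using b that by (simp add: bij_betw_apply)
  define p where "p i = (SOME j. j \<in> fence n \<and> xset (\<phi> (pv m i)) = E n j)" for i
  have pp: "p i \<in> fence n \<and> xset (\<phi> (pv m i)) = E n (p i)" if i: "i \<in> fence m" for i
  proof -
    have "ji n (\<phi> (pv m i))" by (rule isoP_ji[OF iso pv(1)[OF em i] pv_ji[OF em i]])
    then have "\<exists>j\<in>fence n. xset (\<phi> (pv m i)) = E n j" by (rule ji_E[OF en phiH[OF pv(1)[OF em i]]])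
    then show ?thesis unfolding p_def by (metis (mono_tags, lifting) someI_ex)
  qed
  have reachT: "reach m u v \<longleftrightarrow> reach n (\<phi> u) (\<phi> v)" if "u \<in> hyperbinary m" "v \<in> hyperbinary m" for u v
  proof
    assume "reach m u v" then show "reach n (\<phi> u) (\<phi> v)" using isoP_reach[OF iso that(1)] by blast
  next
    assume "reach n (\<phi> u) (\<phi> v)"
    then have "reach m (inv_into (hyperbinary m) \<phi> (\<phi> u)) (inv_into (hyperbinary m) \<phi> (\<phi> v))"
      using isoP_reach[OF iso' phiH[OF that(1)]] by blast
    then show "reach m u v" using inv1[OF that(1)] inv1[OF that(2)] by simp
  qed
  show ?thesis
  proof (intro exI[of _ p] conjI ballI)
    fix i assume i: "i \<in> fence m"
    show "p i \<in> fence n" using pp[OF i] by simp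
  next
    show "inj_on p (fence m)"
    proof (rule inj_onI)
      fix i j assume i: "i \<in> fence m" and j: "j \<in> fence m" and e: "p i = p j"
      have "xset (\<phi> (pv m i)) = xset (\<phi> (pv m j))" using pp[OF i] pp[OF j] e by simp
      then have "\<phi> (pv m i) = \<phi> (pv m j)" using xset_inj phiH pv(1) em i j by blast
      then have "pv m i = pv m j" using inv1 pv(1)[OF em i] pv(1)[OF em j] by metis
      then have "E m i = E m j" using pv(2)[OF em i] pv(2)[OF em j] by simp
      then have "rem m (E m i) j" using E_rem[OF em j] by simp
      then show "i = j" using E_rem_unique[OF em i] by metis
    qed
  next
    fix i assume i: "i \<in> fence m"
    have hu: "pv m i \<in> hyperbinary m" and xu: "xset (pv m i) = E m i" using pv[OF em i] by auto
    have r: "rem m (xset (pv m i)) i" using E_rem[OF em i] xu by simp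
    obtain v where av: "arcA m (lab m i) (pv m i) v" and xv: "xset v = xset (pv m i) - {i}"
      using arc_exists[OF hu] r by (auto simp: rem_def)
    have hv: "v \<in> hyperbinary m" using arc_digrel(2)[OF av] .
    have "arcA n (lab m i) (\<phi> (pv m i)) (\<phi> v)" using a[OF hu hv] av by simp
    then obtain i'' where i'': "i'' \<in> xset (\<phi> (pv m i))" "xset (\<phi> v) = xset (\<phi> (pv m i)) - {i''}" "lab m i = lab n i''"
      using arc_xset by blast
    have "rem n (E n (p i)) i''" using i'' valid_xset[OF phiH[OF hv]] pp[OF i] by (simp add: rem_def)
    then have "i'' = p i" using E_rem_unique[OF en] pp[OF i] by blast
    then show "bit m i = bit n (p i)" using i''(3) lab_inj by simp
  next
    fix i j assume i: "i \<in> fence m" and j: "j \<in> fence m"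
    have i1: "1 \<le> i" using i fence_pos by blast
    have pi1: "1 \<le> p i" using pp[OF i] fence_pos by blast
    have "inE m j i \<longleftrightarrow> i \<in> E m j" using i1 by (simp add: E_def)
    also have "\<dots> \<longleftrightarrow> E m i \<subseteq> E m j" using E_sub_iff[OF em i j] by simp
    also have "\<dots> \<longleftrightarrow> xset (pv m i) \<subseteq> xset (pv m j)" using pv(2)[OF em i] pv(2)[OF em j] by simp
    also have "\<dots> \<longleftrightarrow> reach m (pv m j) (pv m i)" using reach_iff pv(1)[OF em i] pv(1)[OF em j] by simp
    also have "\<dots> \<longleftrightarrow> reach n (\<phi> (pv m j)) (\<phi> (pv m i))" using reachT pv(1)[OF em i] pv(1)[OF em j] by simp
    also have "\<dots> \<longleftrightarrow> xset (\<phi> (pv m i)) \<subseteq> xset (\<phi> (pv m j))" using reach_iff phiH pv(1)[OF em i] pv(1)[OF em j] by simp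
    also have "\<dots> \<longleftrightarrow> E n (p i) \<subseteq> E n (p j)" using pp[OF i] pp[OF j] by simp
    also have "\<dots> \<longleftrightarrow> p i \<in> E n (p j)" using E_sub_iff[OF en] pp[OF i] pp[OF j] by simp
    also have "\<dots> \<longleftrightarrow> inE n (p j) (p i)" using pi1 by (simp add: E_def)
    finally show "inE m j i \<longleftrightarrow> inE n (p j) (p i)" .
  qed
qed

definition topb :: "nat \<Rightarrow> nat" where "topb n = card (fence n)"

lemma fence_eq: "fence n = {1..topb n}"
proof -
  define N where "N = (if fence n = {} then 0 else Max (fence n))"
  have "fence n = {1..N}"
  proof (cases "fence n = {}")
    case True
    then have N0: "N = 0" unfolding N_def by simp
    show ?thesis
    proof (rule ccontr)
      assume "fence n \<noteq> {1..N}" then show False using True N0 by simp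
    qed
  next
    case False
    have fin: "finite (fence n)" by (rule fence_finite)
    have NF: "N \<in> fence n" unfolding N_def using False fin by simp
    show ?thesis
    proof
      show "fence n \<subseteq> {1..N}"
      proof
        fix i assume i: "i \<in> fence n"
        then have "i \<le> N" unfolding N_def using False fin by simp
        then show "i \<in> {1..N}" using i fence_pos by auto
      qed
      show "{1..N} \<subseteq> fence n"
      proof
        fix i assume i: "i \<in> {1..N}"
        then have "(2::nat)^i \<le> 2^N" by (simp add: power_increasing)
        moreover have "2^N \<le> n" using NF by (simp add: fence_def)
        ultimately have "2^i \<le> n" by linarith
        then show "i \<in> fence n" using i by (simp add: fence_def)
      qed
    qed
  qed
  then show ?thesis unfolding topb_def by simp
qed

lemma top_bit: assumes "1 \<le> topb n" shows "bit n (topb n)"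
proof -
  let ?N = "topb n"
  have "?N \<in> fence n" using fence_eq[of n] assms by auto
  then have a: "2^?N \<le> n" by (simp add: fence_def)
  have "Suc ?N \<notin> fence n" using fence_eq[of n] by auto
  then have b: "n < 2 * 2^?N" by (simp add: fence_def)
  have "n div 2^?N = 1"
  proof -
    have "n div 2^?N \<ge> 1" using a by (simp add: div_le_mono[of "2^?N" n "2^?N", simplified])
    moreover have "n div 2^?N < 2" using b by (simp add: div_less_iff_less_mult)
    ultimately show ?thesis by simp
  qed
  then show ?thesis unfolding bit_iff_odd by simp
qed

lemma above_top: assumes "topb n < i" shows "\<not> bit n i"
proof -
  have "Suc (topb n) \<notin> fence n" using fence_eq[of n] by auto
  then have "n < 2^(Suc (topb n))" by (simp add: fence_def)
  moreover have "(2::nat)^(Suc (topb n)) \<le> 2^i" by (rule power_increasing) (use assms in simp_all)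
  ultimately show ?thesis using big_not_bit by (meson less_le_trans)
qed

lemma even_iso_eq: assumes iso: "isoP m n \<phi>" and em: "even m" and en: "even n"
  shows "m = n"
proof -
  obtain p where p1: "\<forall>i\<in>fence m. p i \<in> fence n" and p2: "inj_on p (fence m)"
    and p3: "\<forall>i\<in>fence m. bit m i = bit n (p i)"
    and p4: "\<forall>i\<in>fence m. \<forall>j\<in>fence m. inE m j i \<longleftrightarrow> inE n (p j) (p i)"
    using transfer[OF iso em en] by blast
  obtain q where q1: "\<forall>i\<in>fence n. q i \<in> fence m" and q2: "inj_on q (fence n)"
    using transfer[OF isoP_inv[OF iso] en em] by blast
  have c1: "card (fence m) \<le> card (fence n)"
    using card_inj_on_le[OF p2 _ fence_finite] p1 by blast
  have c2: "card (fence n) \<le> card (fence m)"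
    using card_inj_on_le[OF q2 _ fence_finite] q1 by blast
  define N where "N = topb m"
  have tN: "topb n = N" using c1 c2 unfolding N_def topb_def by simp
  have fm: "fence m = {1..N}" using fence_eq[of m] unfolding N_def .
  have fn: "fence n = {1..N}" using fence_eq[of n] tN by simp
  have fin: "\<forall>i\<in>{1..N}. bit m i = bit n i"
  proof (rule finale[of N p "bit m" "bit n"])
    show "\<And>i. i \<in> {1..N} \<Longrightarrow> p i \<in> {1..N}" using p1 fm fn by blast
    show "inj_on p {1..N}" using p2 fm by simp
    show "\<And>i. i \<in> {1..N} \<Longrightarrow> bit m i = bit n (p i)" using p3 fm by blast
    show "\<And>i j. i \<in> {1..N} \<Longrightarrow> j \<in> {1..N} \<Longrightarrow> inB (bit m) j i \<longleftrightarrow> inB (bit n) (p j) (p i)"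
      using p4 fm unfolding inE_inB by blast
    show "1 \<le> N \<Longrightarrow> bit m N" using top_bit unfolding N_def by blast
    show "1 \<le> N \<Longrightarrow> bit n N" using top_bit tN by metis
  qed
  have "bit m i = bit n i" for i
  proof (cases "i = 0")
    case True then show ?thesis using em en by (simp add: bit_0)
  next
    case False
    show ?thesis
    proof (cases "i \<le> N")
      case True then show ?thesis using fin False by simp
    next
      case False
      then show ?thesis using above_top[of m i] above_top[of n i] tN unfolding N_def by simp
    qed
  qed
  then show ?thesis by (simp add: bit_eq_iff)
qed


lemma arc_iff: "arcA N l u v \<longleftrightarrow> u \<in> hyperbinary N \<and> v \<in> hyperbinary N \<and> (\<exists>i\<in>xset u. xset v = xset u - {i} \<and> l = lab N i)"
proof
  assume a: "arcA N l u v"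
  then show "u \<in> hyperbinary N \<and> v \<in> hyperbinary N \<and> (\<exists>i\<in>xset u. xset v = xset u - {i} \<and> l = lab N i)"
    using arc_digrel(1,2)[OF a] arc_xset[OF a] by blast
next
  assume "u \<in> hyperbinary N \<and> v \<in> hyperbinary N \<and> (\<exists>i\<in>xset u. xset v = xset u - {i} \<and> l = lab N i)"
  then obtain i where hu: "u \<in> hyperbinary N" and hv: "v \<in> hyperbinary N" and i: "i \<in> xset u"
    and xv: "xset v = xset u - {i}" and l: "l = lab N i" by blast
  have "valid N (xset u - {i})" using valid_xset[OF hv] xv by simp
  then obtain v' where a: "arcA N (lab N i) u v'" and xv': "xset v' = xset u - {i}" using arc_exists[OF hu i] by blast
  have "v' = v" using xset_inj[OF arc_digrel(2)[OF a] hv] xv xv' by simp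
  then show "arcA N l u v" using a l by simp
qed

lemma snoc1_H: assumes hu: "u \<in> hyperbinary n" shows "u @ [1] \<in> hyperbinary (2 * n + 1)"
proof -
  have "\<forall>d\<in>set (u @ [1]). d \<le> 2" using hbD(1)[OF hu] by auto
  moreover have "u @ [1] \<noteq> [] \<longrightarrow> hd (u @ [1]) \<noteq> 0" using hbD(2)[OF hu] by (cases u) auto
  moreover have "word_val (u @ [1]) = 2 * n + 1" using hbD(3)[OF hu] by (simp only: word_val_snoc)
  ultimately show ?thesis unfolding hyperbinary_def mem_Collect_eq by blast
qed

lemma H_odd_elem: assumes hw: "w \<in> hyperbinary (2 * n + 1)" shows "\<exists>u\<in>hyperbinary n. w = u @ [1]"
proof -
  have ne: "w \<noteq> []" using hbD(3)[OF hw] by auto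
  define u where "u = butlast w"
  define d where "d = last w"
  have we: "w = u @ [d]" using ne unfolding u_def d_def by simp
  have d2: "d \<le> 2" using hbD(1)[OF hw] ne unfolding d_def by simp
  have val: "2 * word_val u + d = 2 * n + 1" using hbD(3)[OF hw] we by (metis word_val_snoc)
  then have d1: "d = 1" using d2 by presburger
  then have vu: "word_val u = n" using val by simp
  have "\<forall>x\<in>set u. x \<le> 2" using hbD(1)[OF hw] unfolding u_def by (meson in_set_butlastD)
  moreover have "u \<noteq> [] \<longrightarrow> hd u \<noteq> 0" using hbD(2)[OF hw] we by auto
  ultimately have "u \<in> hyperbinary n" using vu unfolding hyperbinary_def mem_Collect_eq by blast
  then show ?thesis using we d1 by blast
qed

lemma xset_snoc1: assumes hu: "u \<in> hyperbinary n" shows "xset (u @ [1]) = Suc ` xset u"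
proof -
  have "t \<in> xset (u @ [1]) \<longleftrightarrow> t \<in> Suc ` xset u" for t
  proof (cases t)
    case 0 then show ?thesis by (simp add: xset_def)
  next
    case (Suc i)
    have "lo (u @ [1]) (Suc i) = 1 + 2 * lo u i" by (rule lo_snoc_Suc)
    moreover have "(2 * a \<le> 1 + 2 * b) \<longleftrightarrow> (a \<le> (b::nat))" for a b by presburger
    ultimately have "(2^Suc i \<le> lo (u @ [1]) (Suc i)) \<longleftrightarrow> (2^i \<le> lo u i)" by simp
    then show ?thesis using Suc by (auto simp: xset_def)
  qed
  then show ?thesis by blast
qed

lemma lab_odd: "lab (2 * n + 1) (Suc i) = lab n i"
proof -
  have "bit (2 * n + 1) (Suc i) = bit n i" by (simp add: bit_Suc)
  then show ?thesis by (simp add: lab_def)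
qed

lemma iso_double: "isoP n (2 * n + 1) (\<lambda>w. w @ [1])"
  unfolding isoP_def
proof (intro conjI allI ballI)
  show "bij_betw (\<lambda>w. w @ [1]) (hyperbinary n) (hyperbinary (2 * n + 1))"
    unfolding bij_betw_def
  proof
    show "inj_on (\<lambda>w. w @ [1]) (hyperbinary n)" by (rule inj_onI) simp
    show "(\<lambda>w. w @ [1]) ` hyperbinary n = hyperbinary (2 * n + 1)"
      using snoc1_H H_odd_elem by blast
  qed
next
  fix l u v assume hu: "u \<in> hyperbinary n" and hv: "v \<in> hyperbinary n"
  have hu': "u @ [1] \<in> hyperbinary (2 * n + 1)" and hv': "v @ [1] \<in> hyperbinary (2 * n + 1)"
    using snoc1_H hu hv by auto
  have "(\<exists>i\<in>xset (u @ [1]). xset (v @ [1]) = xset (u @ [1]) - {i} \<and> l = lab (2 * n + 1) i)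
     \<longleftrightarrow> (\<exists>i\<in>xset u. xset v = xset u - {i} \<and> l = lab n i)"
  proof
    assume "\<exists>i\<in>xset (u @ [1]). xset (v @ [1]) = xset (u @ [1]) - {i} \<and> l = lab (2 * n + 1) i"
    then obtain i where i: "i \<in> Suc ` xset u" and e: "Suc ` xset v = Suc ` xset u - {i}" and l: "l = lab (2 * n + 1) i"
      using xset_snoc1[OF hu] xset_snoc1[OF hv] by auto
    obtain i' where i': "i' \<in> xset u" "i = Suc i'" using i by blast
    have "Suc ` xset v = Suc ` (xset u - {i'})" using e i' by (simp add: image_set_diff)
    then have "xset v = xset u - {i'}" by (simp add: inj_image_eq_iff)
    moreover have "l = lab n i'" using l i' lab_odd by simp
    ultimately show "\<exists>i\<in>xset u. xset v = xset u - {i} \<and> l = lab n i" using i' by blast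
  next
    assume "\<exists>i\<in>xset u. xset v = xset u - {i} \<and> l = lab n i"
    then obtain i where i: "i \<in> xset u" and e: "xset v = xset u - {i}" and l: "l = lab n i" by blast
    have "Suc i \<in> xset (u @ [1])" using i xset_snoc1[OF hu] by simp
    moreover have "xset (v @ [1]) = xset (u @ [1]) - {Suc i}" using e xset_snoc1[OF hu] xset_snoc1[OF hv] by (simp add: image_set_diff)
    moreover have "l = lab (2 * n + 1) (Suc i)" using l lab_odd by simp
    ultimately show "\<exists>i\<in>xset (u @ [1]). xset (v @ [1]) = xset (u @ [1]) - {i} \<and> l = lab (2 * n + 1) i" by blast
  qed
  then show "arcA n l u v \<longleftrightarrow> arcA (2 * n + 1) l (u @ [1]) (v @ [1])"
    using arc_iff[of n l u v] arc_iff[of "2 * n + 1" l "u @ [1]" "v @ [1]"] hu hv hu' hv' by simp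
qed

lemma iso_chain: "\<exists>\<phi>. isoP n (2^t * n + 2^t - 1) \<phi>"
proof (induction t)
  case 0 then show ?case using isoP_id by auto
next
  case (Suc t)
  then obtain \<phi> where p: "isoP n (2^t * n + 2^t - 1) \<phi>" by blast
  have e: "2 * (2^t * n + 2^t - 1) + 1 = 2^Suc t * n + 2^Suc t - (1::nat)"
  proof -
    define x where "x = 2^t * n + (2::nat)^t"
    have x1: "1 \<le> x" unfolding x_def by (simp add: add_increasing)
    have "2^Suc t * n + 2^Suc t = 2 * x" unfolding x_def by (simp add: algebra_simps)
    moreover have "2 * (x - 1) + 1 = 2 * x - 1" using x1 by arith
    ultimately show ?thesis unfolding x_def by simp
  qed
  have "isoP (2^t * n + 2^t - 1) (2 * (2^t * n + 2^t - 1) + 1) (\<lambda>w. w @ [1])" by (rule iso_double)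
  then show ?case using isoP_comp[OF p] e by metis
qed

lemma decomp: "\<exists>(e::nat) t. even e \<and> (n::nat) = 2^t * e + 2^t - 1"
proof (induction n rule: less_induct)
  case (less n)
  show ?case
  proof (cases "even n")
    case True then show ?thesis by (intro exI[of _ n] exI[of _ 0]) simp
  next
    case False
    then have n: "n = 2 * (n div 2) + 1" by simp
    have "n div 2 < n" using False by (cases n) auto
    then obtain e t where e: "even e" "n div 2 = 2^t * e + 2^t - 1" using less by blast
    define x where "x = 2^t * e + (2::nat)^t"
    have x1: "1 \<le> x" unfolding x_def by (simp add: add_increasing)
    have x2: "2^Suc t * e + 2^Suc t = 2 * x" unfolding x_def by (simp add: algebra_simps)
    have "n div 2 = x - 1" using e(2) unfolding x_def by simp
    then have "n = 2 * (x - 1) + 1" using n by simp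
    then have "n = 2 * x - 1" using x1 by arith
    then have "n = 2^Suc t * e + 2^Suc t - 1" using x2 by simp
    then show ?thesis using e(1) by blast
  qed
qed

lemma shift: assumes "b \<le> a" "m = 2^a * e + 2^a - 1" "n = 2^b * e + 2^b - (1::nat)"
  shows "m = 2^(a - b) * n + 2^(a - b) - 1"
proof -
  define c where "c = a - b"
  have a: "a = b + c" using assms(1) unfolding c_def by simp
  have p: "(2::nat)^a = 2^c * 2^b" unfolding a by (simp add: power_add)
  have b1: "(1::nat) \<le> 2^b" and c1: "(1::nat) \<le> 2^c" by simp_all
  have n1: "n + 1 = 2^b * (e + 1)" using assms(3) b1 by (simp add: algebra_simps)
  have m1: "m + 1 = 2^c * (n + 1)" using assms(2) p n1 b1 c1
    by (simp add: algebra_simps)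
  then show ?thesis unfolding c_def[symmetric] using c1 by (simp add: algebra_simps)
qed

theorem mainTheorem11:
  fixes m n :: nat
  shows "A_iso m n \<longleftrightarrow> (\<exists>t::nat. m = 2^t * n + 2^t - 1 \<or> n = 2^t * m + 2^t - 1)"
proof
  assume "A_iso m n"
  then obtain \<phi> where iso: "isoP m n \<phi>" using A_iso_isoP by blast
  obtain e a where e: "even e" "m = 2^a * e + 2^a - 1" using decomp by blast
  obtain f b where f: "even f" "n = 2^b * f + 2^b - 1" using decomp by blast
  obtain \<psi>1 where p1: "isoP e m \<psi>1" using iso_chain[of e a] e(2) by auto
  obtain \<psi>2 where p2: "isoP f n \<psi>2" using iso_chain[of f b] f(2) by auto
  have "isoP e f (inv_into (hyperbinary f) \<psi>2 \<circ> (\<phi> \<circ> \<psi>1))"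
    by (rule isoP_comp[OF isoP_comp[OF p1 iso] isoP_inv[OF p2]])
  then have ef: "e = f" using even_iso_eq e(1) f(1) by blast
  show "\<exists>t::nat. m = 2^t * n + 2^t - 1 \<or> n = 2^t * m + 2^t - 1"
  proof (cases "b \<le> a")
    case True
    then have "m = 2^(a - b) * n + 2^(a - b) - 1" using shift[OF True e(2)] f(2) ef by simp
    then show ?thesis by blast
  next
    case False
    then have "n = 2^(b - a) * m + 2^(b - a) - 1" using shift[of a b n f m] f(2) e(2) ef by simp
    then show ?thesis by blast
  qed
next
  assume "\<exists>t::nat. m = 2^t * n + 2^t - 1 \<or> n = 2^t * m + 2^t - 1"
  then obtain t where "m = 2^t * n + 2^t - 1 \<or> n = 2^t * m + 2^t - 1" by blast
  then show "A_iso m n"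
  proof
    assume "m = 2^t * n + 2^t - 1"
    then obtain \<phi> where "isoP n m \<phi>" using iso_chain[of n t] by auto
    then show ?thesis using isoP_inv A_iso_isoP by blast
  next
    assume "n = 2^t * m + 2^t - 1"
    then obtain \<phi> where "isoP m n \<phi>" using iso_chain[of m t] by auto
    then show ?thesis using A_iso_isoP by blast
  qed
qed


end
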